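(* Let $k$ be a field of characteristic $0$ and $C$ a finite set. Consider the post-Lie-Rinehart algebra $(k,\mathrm{Lie}(\mathcal{T}_C),[-,-],\curvearrowright)$ (scalars $k$, zero anchor). Its algebra of elementary module endomorphisms $\mathrm{El}_k(\mathrm{Lie}(\mathcal{T}_C))$ equals the subalgebra of $(\mathrm{End}_k(\mathrm{Lie}(\mathcal{T}_C)),\circ)$ generated by $\hat{\mathcal{T}}^0_C$ (trees with a free edge at the root, acting as endomorphisms) together with $\delta(\mathrm{Lie}(\mathcal{T}_C))=\{\delta_x : x\in\mathrm{Lie}(\mathcal{T}_C)\}$, where $\delta_x(\eta)=[x,\eta]$.
   Context: Planar trees: $T_C$ is the set of planar rooted trees with vertices decorated by $C$; for $c\in C$ and an ordered (possibly empty) list $t_1,\dots,t_p\in T_C$, $B_c(t_1\cdots t_p)$ denotes the tree whose root is decorated by $c$ and whose ordered children subtrees are $t_1,\dots,t_p$; $\mathcal{T}_C=\mathrm{span}_k(T_C)$. Left grafting: $t_2\curvearrowright t_1=\sum_{v\in V(t_1)}t_2\curvearrowright_v t_1$, where $t_2\curvearrowright_v t_1$ attaches the root of $t_2$ to the vertex $v$ of $t_1$ as its new leftmost child. $\mathrm{Lie}(\mathcal{T}_C)$ is the free Lie algebra on the vector space $\mathcal{T}_C$, and $\curvearrowright$ is extended by $t_3\curvearrowright[t_2,t_1]=[t_3\curvearrowright t_2,t_1]+[t_2,t_3\curvearrowright t_1]$, $[t_3,t_2]\curvearrowright t_1=\mathrm{Ass}(t_3,t_2,t_1)-\mathrm{Ass}(t_2,t_3,t_1)$,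 $\mathrm{Ass}(a,b,c)=a\curvearrowright(b\curvearrowright c)-(a\curvearrowright b)\curvearrowright c$; this makes $\mathrm{Lie}(\mathcal{T}_C)$ a post-Lie algebra. Extend $\curvearrowright$ to a left action of the universal enveloping algebra $U$ of $(\mathrm{Lie}(\mathcal{T}_C),[-,-])$ (product $\cdot$) by $\mathbf 1\curvearrowright y=y$, $x\curvearrowright(w_1\cdot w_2)=(x\curvearrowright w_1)\cdot w_2+w_1\cdot(x\curvearrowright w_2)$, $(x\cdot w)\curvearrowright y=x\curvearrowright(w\curvearrowright y)-(x\curvearrowright w)\curvearrowright y$ for $x\in\mathrm{Lie}(\mathcal{T}_C)$, $w\in U$; then $B_c(t_1\cdots t_p)=(t_1\cdots t_p)\curvearrowright\bullet_c$. A tree with a free edge at the root is $B_c(t_1\cdots t_{j-1}\times t_j\cdots t_p)$, i.e. a tree with one additional empty input slot $\times$ at a specified position among the root's children; it acts as the endomorphism $x\mapsto (t_1\cdots t_{j-1}\cdot x\cdot t_j\cdots t_p)\curvearrowright\bullet_c$. $\hat{\mathcal{T}}^0_C$ is the span of these. For this post-Lie-Rinehart algebra (with scalars $k$ acting trivially), the connection is $\curvearrowright$, the torsion is $T(x,y)=-[x,y]$, $dX(Z)=Z\curvearrowright X$, $\delta X(Z)=T(Z,X)=[X,Z]$, $(\hat\nabla_X\nu)(Y)=X\curvearrowright\nu(Y)-\nu(X\curvearrowright Y)$, and $\mathrm{El}_k$ is the subalgebra of $\mathrm{End}_k$ generated by all $\hat\nabla_{X_1}\cdots\hat\nabla_{X_m}dY$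 and $\hat\nabla_{X_1}\cdots\hat\nabla_{X_m}\delta Y$, $m\ge0$. *)

theory Defs
  imports Main
begin

text \<open>Node c ts is the tree B_c(t_1 ... t_p) with root decorated by c and
ordered children subtrees ts.\<close>
datatype 'c ptree = Node 'c "'c ptree list"

text \<open>Left grafting of s onto a tree: list of all results, one per vertex
(s becomes the new leftmost child of that vertex).\<close>
fun graft :: "'c ptree \<Rightarrow> 'c ptree \<Rightarrow> 'c ptree list"
and graftL :: "'c ptree \<Rightarrow> 'c ptree list \<Rightarrow> 'c ptree list list" where
  "graft s (Node c ts) = Node c (s # ts) # map (Node c) (graftL s ts)"
| "graftL s [] = []"
| "graftL s (t # ts) = map (\<lambda>t'. t' # ts) (graft s t) @ map (\<lambda>ts'. t # ts') (graftL s ts)"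

text \<open>Elements of U = T(span T_C) are (finitely supported) k-valued functions on
words (ordered forests) of trees; the product is concatenation.\<close>
type_synonym ('c, 'k) U = "'c ptree list \<Rightarrow> 'k"

definition monomial :: "'c ptree list \<Rightarrow> ('c, 'k::field) U" where
  "monomial w = (\<lambda>v. if v = w then 1 else 0)"

definition lin :: "('c ptree list \<Rightarrow> ('c, 'k::field) U) \<Rightarrow> ('c, 'k) U \<Rightarrow> ('c, 'k) U" where
  "lin F f = (\<lambda>v. \<Sum>w | f w \<noteq> 0. f w * F w v)"

definition ofList :: "'c ptree list list \<Rightarrow> ('c, 'k::field) U" where
  "ofList ws = (\<lambda>v. of_nat (count_list ws v))"

definition mult :: "('c, 'k::field) U \<Rightarrow> ('c, 'k) U \<Rightarrow> ('c, 'k) U" where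
  "mult f g = lin (\<lambda>w. lin (\<lambda>w'. monomial (w @ w')) g) f"

definition bracket :: "('c, 'k::field) U \<Rightarrow> ('c, 'k) U \<Rightarrow> ('c, 'k) U" where
  "bracket f g = (\<lambda>v. mult f g v - mult g f v)"

inductive_set LieT :: "('c, 'k::field) U set" where
  gen: "monomial [t] \<in> LieT"
| zero: "(\<lambda>v. 0) \<in> LieT"
| add: "f \<in> LieT \<Longrightarrow> g \<in> LieT \<Longrightarrow> (\<lambda>v. f v + g v) \<in> LieT"
| smult: "f \<in> LieT \<Longrightarrow> (\<lambda>v. a * f v) \<in> LieT"
| brk: "f \<in> LieT \<Longrightarrow> g \<in> LieT \<Longrightarrow> bracket f g \<in> LieT"

text \<open>A tree acting on a word: derivation extending left grafting.\<close>
fun derivL :: "'c ptree \<Rightarrow> 'c ptree list \<Rightarrow> 'c ptree list list" where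
  "derivL s [] = []"
| "derivL s (t # ws) = map (\<lambda>t'. t' # ws) (graft s t) @ map (\<lambda>ws'. t # ws') (derivL s ws)"

definition act1 :: "'c ptree \<Rightarrow> ('c, 'k::field) U \<Rightarrow> ('c, 'k) U" where
  "act1 s y = lin (\<lambda>v. ofList (derivL s v)) y"

text \<open>Action of a word: 1 acts as identity, (x w) acts by
  x \<rhd> (w \<rhd> y) - (x \<rhd> w) \<rhd> y  (recursion on the length of the word).\<close>
primrec actN :: "nat \<Rightarrow> 'c ptree list \<Rightarrow> ('c, 'k::field) U \<Rightarrow> ('c, 'k) U" where
  "actN 0 w y = y"
| "actN (Suc n) w y =
     (case w of [] \<Rightarrow> y
      | x # w' \<Rightarrow> (\<lambda>v. act1 x (actN n w' y) v
                        - lin (\<lambda>u. actN n u y) (ofList (derivL x w')) v))"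

definition act :: "'c ptree list \<Rightarrow> ('c, 'k::field) U \<Rightarrow> ('c, 'k) U" where
  "act w y = actN (length w) w y"

definition actU :: "('c, 'k::field) U \<Rightarrow> ('c, 'k) U \<Rightarrow> ('c, 'k) U" where
  "actU f y = lin (\<lambda>w. act w y) f"

text \<open>Endomorphisms of Lie(T_C) are represented by functions on U that vanish
outside Lie(T_C).\<close>
definition restrictL :: "(('c, 'k::field) U \<Rightarrow> ('c, 'k) U) \<Rightarrow> ('c, 'k) U \<Rightarrow> ('c, 'k) U" where
  "restrictL F = (\<lambda>x. if x \<in> LieT then F x else (\<lambda>v. 0))"

inductive_set genAlg :: "((('c, 'k::field) U \<Rightarrow> ('c, 'k) U)) set \<Rightarrow> (('c, 'k) U \<Rightarrow> ('c, 'k) U) set"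
  for S where
  gen: "F \<in> S \<Longrightarrow> restrictL F \<in> genAlg S"
| one: "restrictL id \<in> genAlg S"
| add: "F \<in> genAlg S \<Longrightarrow> G \<in> genAlg S \<Longrightarrow> restrictL (\<lambda>x v. F x v + G x v) \<in> genAlg S"
| smult: "F \<in> genAlg S \<Longrightarrow> restrictL (\<lambda>x v. a * F x v) \<in> genAlg S"
| comp: "F \<in> genAlg S \<Longrightarrow> G \<in> genAlg S \<Longrightarrow> restrictL (F \<circ> G) \<in> genAlg S"

definition dmap :: "('c, 'k::field) U \<Rightarrow> ('c, 'k) U \<Rightarrow> ('c, 'k) U" where
  "dmap Y = (\<lambda>Z. actU Z Y)"

definition delta :: "('c, 'k::field) U \<Rightarrow> ('c, 'k) U \<Rightarrow> ('c, 'k) U" where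
  "delta Y = (\<lambda>Z. bracket Y Z)"

definition nabla :: "('c, 'k::field) U \<Rightarrow> (('c, 'k) U \<Rightarrow> ('c, 'k) U) \<Rightarrow> ('c, 'k) U \<Rightarrow> ('c, 'k) U" where
  "nabla X \<nu> = (\<lambda>Y v. actU X (\<nu> Y) v - \<nu> (actU X Y) v)"

fun nablas :: "('c, 'k::field) U list \<Rightarrow> (('c, 'k) U \<Rightarrow> ('c, 'k) U) \<Rightarrow> ('c, 'k) U \<Rightarrow> ('c, 'k) U" where
  "nablas [] \<nu> = \<nu>"
| "nablas (X # Xs) \<nu> = nabla X (nablas Xs \<nu>)"

definition El :: "(('c, 'k::field) U \<Rightarrow> ('c, 'k) U) set" where
  "El = genAlg ({nablas Xs (dmap Y) | Xs Y. set Xs \<subseteq> LieT \<and> Y \<in> LieT}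
              \<union> {nablas Xs (delta Y) | Xs Y. set Xs \<subseteq> LieT \<and> Y \<in> LieT})"

text \<open>Tree with a free edge at the root, B_c(ts1 \<times> ts2), as the endomorphism
  x \<mapsto> (ts1 \<cdot> x \<cdot> ts2) \<rhd> \<bullet>_c.\<close>
definition freeEdge :: "'c \<Rightarrow> 'c ptree list \<Rightarrow> 'c ptree list \<Rightarrow> ('c, 'k::field) U \<Rightarrow> ('c, 'k) U" where
  "freeEdge c ts1 ts2 = (\<lambda>x. actU (mult (mult (monomial ts1) x) (monomial ts2)) (monomial [Node c []]))"

definition That0 :: "(('c, 'k::field) U \<Rightarrow> ('c, 'k) U) set" where
  "That0 = {freeEdge c ts1 ts2 | c ts1 ts2. True}"

end

theory Submission
  imports Defs "HOL-Library.Function_Algebras"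
begin


definition supp :: "('c, 'k::field) U \<Rightarrow> 'c ptree list set" where
  "supp f = {w. f w \<noteq> 0}"

abbreviation FS :: "('c, 'k::field) U \<Rightarrow> bool" where
  "FS f \<equiv> finite (supp f)"

definition sc :: "'k::field \<Rightarrow> ('c, 'k) U \<Rightarrow> ('c, 'k) U" where
  "sc a f = (\<lambda>v. a * f v)"

lemma sc_apply: "sc a f v = a * f v" by (simp add: sc_def)
declare sc_apply[simp]

lemma lam_plus: "(\<lambda>v. f v + g v) = f + g" by (simp add: fun_eq_iff)
lemma lam_minus: "(\<lambda>v. f v - g v) = f - g" by (simp add: fun_eq_iff)
lemma lam_sc: "(\<lambda>v. a * f v) = sc a f" by (simp add: fun_eq_iff)
lemma lam_zero: "(\<lambda>v. 0) = 0" by (simp add: fun_eq_iff)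

lemma supp_zero[simp]: "supp 0 = {}" by (simp add: supp_def)
lemma supp_add: "supp (f + g) \<subseteq> supp f \<union> supp g" by (auto simp: supp_def)
lemma supp_minus: "supp (f - g) \<subseteq> supp f \<union> supp g" by (auto simp: supp_def)
lemma supp_uminus[simp]: "supp (- f) = supp f" by (auto simp: supp_def)
lemma supp_sc: "supp (sc a f) \<subseteq> supp f" by (auto simp: supp_def)
lemma supp_monomial[simp]: "supp (monomial w :: ('c,'k::field) U) = {w}"
  by (auto simp: supp_def monomial_def)

lemma FS_zero[simp]: "FS 0" by simp
lemma FS_add[simp]: "FS f \<Longrightarrow> FS g \<Longrightarrow> FS (f + g)"
  by (meson finite_Un finite_subset supp_add)
lemma FS_minus[simp]: "FS f \<Longrightarrow> FS g \<Longrightarrow> FS (f - g)"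
  by (meson finite_Un finite_subset supp_minus)
lemma FS_uminus[simp]: "FS f \<Longrightarrow> FS (- f)" by simp
lemma FS_sc[simp]: "FS f \<Longrightarrow> FS (sc a f)"
  by (meson finite_subset supp_sc)
lemma FS_monomial[simp]: "FS (monomial w)" by simp

lemma sc_add: "sc a (f + g) = sc a f + sc a g" by (simp add: fun_eq_iff algebra_simps)
lemma sc_minus: "sc a (f - g) = sc a f - sc a g" by (simp add: fun_eq_iff algebra_simps)
lemma sc_zero[simp]: "sc a 0 = 0" "sc 0 f = 0" by (auto simp: fun_eq_iff)
lemma sc_one[simp]: "sc 1 f = f" by (auto simp: fun_eq_iff)
lemma sc_sc[simp]: "sc a (sc b f) = sc (a*b) f" by (auto simp: fun_eq_iff)
lemma sc_uminus: "sc (-1) f = - f" by (auto simp: fun_eq_iff)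

lemma lin_expand:
  assumes "finite S" "supp f \<subseteq> S"
  shows "lin F f v = (\<Sum>w\<in>S. f w * F w v)"
proof -
  have "lin F f v = (\<Sum>w\<in>supp f. f w * F w v)" by (simp add: lin_def supp_def)
  also have "\<dots> = (\<Sum>w\<in>S. f w * F w v)"
    by (rule sum.mono_neutral_left) (use assms in \<open>auto simp: supp_def\<close>)
  finally show ?thesis .
qed

lemma lin_add: "FS f \<Longrightarrow> FS g \<Longrightarrow> lin F (f + g) = lin F f + lin F g"
  apply (rule ext)
  apply (simp only: plus_fun_apply)
  apply (subst (1 2 3) lin_expand[where S = "supp f \<union> supp g"])
  using supp_add apply (auto simp: algebra_simps sum.distrib)
  done

lemma lin_sc: "FS f \<Longrightarrow> lin F (sc a f) = sc a (lin F f)"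
  apply (rule ext)
  apply (simp only: sc_apply)
  apply (subst (1 2) lin_expand[where S = "supp f"])
  using supp_sc apply (auto simp: algebra_simps sum_distrib_left)
  done

lemma lin_zero[simp]: "lin F 0 = 0"
  by (simp add: lin_def fun_eq_iff)

lemma lin_minus: "FS f \<Longrightarrow> FS g \<Longrightarrow> lin F (f - g) = lin F f - lin F g"
  apply (rule ext)
  apply (simp only: minus_apply)
  apply (subst (1 2 3) lin_expand[where S = "supp f \<union> supp g"])
  using supp_minus apply (auto simp: algebra_simps sum_subtractf)
  done

lemma lin_monomial[simp]: "lin F (monomial w) = F w"
  apply (rule ext)
  apply (subst lin_expand[where S = "{w}"])
    apply (simp, simp)
  apply (simp add: monomial_def)
  done

lemma lin_Fadd: "lin (\<lambda>w. F w + G w) f = lin F f + lin G f"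
  by (simp add: lin_def fun_eq_iff algebra_simps sum.distrib)

lemma lin_Fminus: "lin (\<lambda>w. F w - G w) f = lin F f - lin G f"
  by (simp add: lin_def fun_eq_iff algebra_simps sum_subtractf)

lemma lin_Fsc: "lin (\<lambda>w. sc a (F w)) f = sc a (lin F f)"
  by (simp add: lin_def fun_eq_iff algebra_simps sum_distrib_left)

lemma lin_Fzero[simp]: "lin (\<lambda>w. 0) f = 0"
  by (simp add: lin_def fun_eq_iff)

lemma lin_cong: "(\<And>w. f w \<noteq> 0 \<Longrightarrow> F w = G w) \<Longrightarrow> lin F f = lin G f"
  by (simp add: lin_def fun_eq_iff)

lemma lin_swap: "lin (\<lambda>a. lin (\<lambda>b. K a b) g) f = lin (\<lambda>b. lin (\<lambda>a. K a b) f) g"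
proof (rule ext)
  fix v
  have "lin (\<lambda>a. lin (\<lambda>b. K a b) g) f v = (\<Sum>a | f a \<noteq> 0. \<Sum>b | g b \<noteq> 0. f a * (g b * K a b v))"
    unfolding lin_def by (simp only: sum_distrib_left)
  also have "\<dots> = (\<Sum>b | g b \<noteq> 0. \<Sum>a | f a \<noteq> 0. f a * (g b * K a b v))"
    by (rule sum.swap)
  also have "\<dots> = lin (\<lambda>b. lin (\<lambda>a. K a b) f) g v"
    unfolding lin_def by (simp only: sum_distrib_left mult.left_commute)
  finally show "lin (\<lambda>a. lin (\<lambda>b. K a b) g) f v = lin (\<lambda>b. lin (\<lambda>a. K a b) f) g v" .
qed

lemma supp_lin: "supp (lin F f) \<subseteq> (\<Union>w\<in>supp f. supp (F w))"
proof
  fix v assume "v \<in> supp (lin F f)"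
  then have "(\<Sum>w | f w \<noteq> 0. f w * F w v) \<noteq> 0" by (simp add: supp_def lin_def)
  then obtain w where w: "w \<in> {w. f w \<noteq> 0}" "f w * F w v \<noteq> 0"
    by (meson sum.not_neutral_contains_not_neutral)
  then have "f w \<noteq> 0" "F w v \<noteq> 0" by auto
  then show "v \<in> (\<Union>w\<in>supp f. supp (F w))" by (auto simp: supp_def)
qed

lemma FS_lin: "FS f \<Longrightarrow> (\<And>w. f w \<noteq> 0 \<Longrightarrow> FS (F w)) \<Longrightarrow> FS (lin F f)"
  by (rule finite_subset[OF supp_lin]) (auto simp: supp_def)

lemma FS_induct_aux:
  fixes P :: "('c, 'k::field) U \<Rightarrow> bool"
  assumes "finite T" "T \<subseteq> supp f"
    and "P 0"
    and step: "\<And>g w a. FS g \<Longrightarrow> supp g \<subseteq> supp f \<Longrightarrow> w \<in> supp f \<Longrightarrow> g w = 0 \<Longrightarrow> P g \<Longrightarrow> P (g + sc a (monomial w))"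
  shows "\<forall>g. supp g = T \<longrightarrow> P g"
  using assms(1,2)
proof (induction T rule: finite_subset_induct')
  case empty
  then show ?case using assms(3) by (auto simp: supp_def fun_eq_iff lam_zero[symmetric])
next
  case (insert w T)
  show ?case
  proof (intro allI impI)
    fix g :: "('c, 'k) U" assume g: "supp g = insert w T"
    define h where "h = g(w := 0)"
    have sh: "supp h = T" using g insert.hyps by (auto simp: supp_def h_def)
    have "g = h + sc (g w) (monomial w)"
      by (auto simp: fun_eq_iff h_def monomial_def sc_apply)
    moreover have "P (h + sc (g w) (monomial w))"
      apply (rule step)
      using sh insert by (auto simp: h_def)
    ultimately show "P g" by simp
  qed
qed

lemma FS_induct[consumes 1, case_names zero step]:
  fixes P :: "('c, 'k::field) U \<Rightarrow> bool"
  assumes "FS f" "P 0"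
    and "\<And>g w a. FS g \<Longrightarrow> supp g \<subseteq> supp f \<Longrightarrow> w \<in> supp f \<Longrightarrow> g w = 0 \<Longrightarrow> P g \<Longrightarrow> P (g + sc a (monomial w))"
  shows "P f"
  using FS_induct_aux[OF assms(1) order_refl, of P] assms by blast

lemma lin_lin:
  assumes "FS f" "\<And>w. FS (F w)"
  shows "lin G (lin F f) = lin (\<lambda>w. lin G (F w)) f"
  using assms(1)
proof (induction rule: FS_induct)
  case zero then show ?case by (simp add: lam_zero)
next
  case (step g w a)
  have "FS (lin F g)" by (rule FS_lin) (use step assms in auto)
  moreover have "FS (sc a (F w))" using assms by simp
  ultimately show ?case using step assms
    by (simp only: lin_add FS_sc FS_monomial lin_sc lin_monomial)
qed

declare sc_apply[simp del]



lemma FS_lin': "FS f \<Longrightarrow> (\<And>w. FS (F w)) \<Longrightarrow> FS (lin F f)"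
  by (rule FS_lin)

lemma ofList_Nil[simp]: "ofList [] = 0"
  by (simp add: ofList_def fun_eq_iff)

lemma ofList_Cons: "ofList (x # L) = monomial x + ofList L"
  by (simp add: ofList_def fun_eq_iff monomial_def)

lemma ofList_sum_list: "ofList L = sum_list (map monomial L)"
  by (induction L) (simp_all add: ofList_Cons)

lemma ofList_append: "ofList (L1 @ L2) = ofList L1 + ofList L2"
  by (simp add: ofList_sum_list)

lemma supp_ofList: "supp (ofList L) \<subseteq> set L"
  unfolding supp_def ofList_def by (auto, metis count_list_0_iff of_nat_0)

lemma FS_ofList[simp]: "FS (ofList L)"
  by (meson List.finite_set finite_subset supp_ofList)

lemma FS_sum_list: "(\<And>x. x \<in> set L \<Longrightarrow> FS x) \<Longrightarrow> FS (sum_list L)"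
  by (induction L) auto

lemma lin_sum_list: "(\<And>x. x \<in> set L \<Longrightarrow> FS x) \<Longrightarrow> lin F (sum_list L) = sum_list (map (lin F) L)"
proof (induction L)
  case Nil then show ?case by (simp add: lam_zero)
next
  case (Cons a L)
  have fa: "FS a" "FS (sum_list L)" using Cons.prems by (auto intro!: FS_sum_list)
  have "lin F (sum_list (a # L)) = lin F (a + sum_list L)" by (simp only: sum_list.Cons)
  also have "\<dots> = lin F a + lin F (sum_list L)" by (rule lin_add[OF fa])
  also have "\<dots> = sum_list (map (lin F) (a # L))" using Cons by simp
  finally show ?case .
qed

lemma lin_ofList: "lin F (ofList L) = sum_list (map F L)"
  unfolding ofList_sum_list
  by (subst lin_sum_list) (auto simp: o_def)

lemma ofList_map: "ofList (map h L) = lin (\<lambda>x. monomial (h x)) (ofList L)"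
  by (simp only: lin_ofList) (simp add: ofList_sum_list o_def)

lemma FS_mult[simp]: "FS f \<Longrightarrow> FS g \<Longrightarrow> FS (mult f g)"
  unfolding mult_def by (intro FS_lin) auto

lemma mult_add_left: "FS f \<Longrightarrow> FS g \<Longrightarrow> mult (f + g) h = mult f h + mult g h"
  unfolding mult_def by (simp add: lin_add)

lemma mult_minus_left: "FS f \<Longrightarrow> FS g \<Longrightarrow> mult (f - g) h = mult f h - mult g h"
  unfolding mult_def by (simp add: lin_minus)

lemma mult_sc_left: "FS f \<Longrightarrow> mult (sc a f) h = sc a (mult f h)"
  unfolding mult_def by (simp add: lin_sc)

lemma mult_add_right: "FS g \<Longrightarrow> FS h \<Longrightarrow> mult f (g + h) = mult f g + mult f h"
  unfolding mult_def by (simp add: lin_add lin_Fadd)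

lemma mult_minus_right: "FS g \<Longrightarrow> FS h \<Longrightarrow> mult f (g - h) = mult f g - mult f h"
  unfolding mult_def by (simp add: lin_minus lin_Fminus)

lemma mult_sc_right: "FS g \<Longrightarrow> mult f (sc a g) = sc a (mult f g)"
  unfolding mult_def by (simp add: lin_sc lin_Fsc)

lemma lin_Fzero'[simp]: "lin 0 f = 0"
  by (simp add: lin_def fun_eq_iff)

lemma mult_zero[simp]: "mult 0 h = 0" "mult f 0 = 0"
  unfolding mult_def by (simp_all add: lam_zero)

lemma mult_monoL: "mult (monomial u) g = lin (\<lambda>w'. monomial (u @ w')) g"
  unfolding mult_def by simp

lemma mult_monoR: "mult f (monomial v) = lin (\<lambda>w. monomial (w @ v)) f"
  unfolding mult_def by simp

lemma mult_mono_mono[simp]: "mult (monomial u) (monomial v) = monomial (u @ v)"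
  unfolding mult_def by simp

lemma lin_mono_lin: "FS g \<Longrightarrow> lin (\<lambda>x. monomial (h x)) (lin (\<lambda>w. monomial (k w)) g) = lin (\<lambda>w. monomial (h (k w))) g"
  by (subst lin_lin) auto

lemma mult_assoc:
  assumes "FS f" "FS g" "FS h"
  shows "mult (mult f g) h = mult f (mult g h)"
proof -
  have "mult (mult f g) h = lin (\<lambda>x. lin (\<lambda>w'. monomial (x @ w')) h) (lin (\<lambda>w. lin (\<lambda>w'. monomial (w @ w')) g) f)"
    unfolding mult_def ..
  also have "\<dots> = lin (\<lambda>w. lin (\<lambda>x. lin (\<lambda>w'. monomial (x @ w')) h) (lin (\<lambda>w'. monomial (w @ w')) g)) f"
    by (rule lin_lin) (rule assms, rule FS_lin', rule assms, simp)
  also have "\<dots> = lin (\<lambda>w. lin (\<lambda>w'. lin (\<lambda>w''. monomial (w @ w' @ w'')) h) g) f"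
    by (subst lin_lin) (rule assms, simp, simp)
  also have "\<dots> = lin (\<lambda>w. lin (\<lambda>x. monomial (w @ x)) (lin (\<lambda>w'. lin (\<lambda>w''. monomial (w' @ w'')) h) g)) f"
    apply (rule arg_cong[where f="\<lambda>F. lin F f"])
    apply (rule ext)
    apply (subst lin_lin)
      apply (rule assms, rule FS_lin', rule assms, simp)
    apply (rule lin_cong)
    apply (subst lin_mono_lin, rule assms, simp)
    done
  also have "\<dots> = mult f (mult g h)"
    unfolding mult_def ..
  finally show ?thesis .
qed

lemma lin_monomial_id: "FS f \<Longrightarrow> lin monomial f = f"
proof (induction rule: FS_induct)
  case zero then show ?case by (simp add: lam_zero)
next
  case (step g w a)
  then show ?case by (simp only: lin_add FS_sc FS_monomial lin_sc lin_monomial)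
qed

lemma mult_one_left[simp]: "FS f \<Longrightarrow> mult (monomial []) f = f"
  by (simp add: mult_monoL lin_monomial_id[unfolded eta_contract_eq])

lemma mult_one_right[simp]: "FS f \<Longrightarrow> mult f (monomial []) = f"
  by (simp add: mult_monoR lin_monomial_id)

lemma bracket_eq: "bracket f g = mult f g - mult g f"
  unfolding bracket_def by (rule lam_minus)

lemma FS_bracket[simp]: "FS f \<Longrightarrow> FS g \<Longrightarrow> FS (bracket f g)"
  unfolding bracket_eq by (intro FS_minus FS_mult)

lemma derivL_append: "derivL s (u @ v) = map (\<lambda>x. x @ v) (derivL s u) @ map (\<lambda>x. u @ x) (derivL s v)"
  by (induction u) auto

lemma length_derivL: "x \<in> set (derivL s w) \<Longrightarrow> length x = length w"
  by (induction w arbitrary: x) auto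

lemma graftL_eq_derivL: "graftL s ts = derivL s ts"
  by (induction ts) auto

lemma FS_act1[simp]: "FS y \<Longrightarrow> FS (act1 t y)"
  unfolding act1_def by (intro FS_lin) auto

lemma act1_add: "FS f \<Longrightarrow> FS g \<Longrightarrow> act1 t (f + g) = act1 t f + act1 t g"
  unfolding act1_def by (simp add: lin_add)
lemma act1_minus: "FS f \<Longrightarrow> FS g \<Longrightarrow> act1 t (f - g) = act1 t f - act1 t g"
  unfolding act1_def by (simp add: lin_minus)
lemma act1_sc: "FS f \<Longrightarrow> act1 t (sc a f) = sc a (act1 t f)"
  unfolding act1_def by (simp add: lin_sc)
lemma act1_zero[simp]: "act1 t 0 = 0"
  unfolding act1_def by simp
lemma act1_mono: "act1 t (monomial w) = ofList (derivL t w)"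
  unfolding act1_def by simp

lemma act1_deriv:
  assumes "FS f" "FS g"
  shows "act1 t (mult f g) = mult (act1 t f) g + mult f (act1 t g)"
proof -
  let ?D = "\<lambda>w. ofList (derivL t w) :: ('a,'b) U"
  have D: "?D (w @ w') = lin (\<lambda>x. monomial (x @ w')) (?D w) + lin (\<lambda>x. monomial (w @ x)) (?D w')" for w w'
    by (simp only: derivL_append ofList_append ofList_map)
  have E2: "lin (\<lambda>x. monomial (w @ x)) (lin ?D g) = lin (\<lambda>w'. lin (\<lambda>x. monomial (w @ x)) (?D w')) g" for w
    by (rule lin_lin) (use assms in auto)
  have "act1 t (mult f g) = lin ?D (lin (\<lambda>w. lin (\<lambda>w'. monomial (w @ w')) g) f)"
    unfolding act1_def mult_def ..
  also have "\<dots> = lin (\<lambda>w. lin ?D (lin (\<lambda>w'. monomial (w @ w')) g)) f"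
    by (rule lin_lin) (use assms in \<open>auto intro!: FS_lin\<close>)
  also have "\<dots> = lin (\<lambda>w. lin (\<lambda>w'. ?D (w @ w')) g) f"
    by (subst lin_lin) (use assms in auto)
  also have "\<dots> = lin (\<lambda>w. lin (\<lambda>w'. lin (\<lambda>x. monomial (x @ w')) (?D w)) g
                     + lin (\<lambda>w'. lin (\<lambda>x. monomial (w @ x)) (?D w')) g) f"
    by (simp only: D lin_Fadd)
  also have "\<dots> = lin (\<lambda>w. lin (\<lambda>x. lin (\<lambda>w'. monomial (x @ w')) g) (?D w)) f
                  + lin (\<lambda>w. lin (\<lambda>x. monomial (w @ x)) (lin ?D g)) f"
    apply (subst lin_Fadd)
    apply (subst lin_swap)
    apply (simp only: E2)
    done
  also have "\<dots> = mult (act1 t f) g + mult f (act1 t g)"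
    unfolding act1_def mult_def
    by (subst (2) lin_lin) (use assms in auto)
  finally show ?thesis .
qed



lemma sum_list_fun_apply: "sum_list L (v::'b) = sum_list (map (\<lambda>f. f v) L)"
  by (induction L) simp_all

lemma sum_list_addf': "sum_list (map (\<lambda>u. (f u :: 'a \<Rightarrow> 'b::ab_group_add) + g u) L) = sum_list (map f L) + sum_list (map g L)"
  by (induction L) (simp_all add: fun_eq_iff algebra_simps sum_list_fun_apply)

lemma sum_list_minusf': "sum_list (map (\<lambda>u. (f u :: 'a \<Rightarrow> 'b::ab_group_add) - g u) L) = sum_list (map f L) - sum_list (map g L)"
  by (induction L) (simp_all add: fun_eq_iff algebra_simps sum_list_fun_apply)

lemma sc_sum_list: "sum_list (map (\<lambda>u. sc a (f u :: ('c,'k::field) U)) L) = sc a (sum_list (map f L))"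
  by (induction L) (simp_all add: fun_eq_iff sc_apply algebra_simps sum_list_fun_apply)

lemma ofList_nz: "ofList L u \<noteq> 0 \<Longrightarrow> u \<in> set L"
  using supp_ofList[of L] unfolding supp_def by auto

lemma act_Nil[simp]: "act [] y = y"
  by (simp add: act_def)

lemma act_Cons: "act (t # w) y = act1 t (act w y) - lin (\<lambda>u. act u y) (ofList (derivL t w))"
proof -
  have "act (t # w) y = act1 t (act w y) - lin (\<lambda>u. actN (length w) u y) (ofList (derivL t w))"
    unfolding act_def by (simp only: length_Cons actN.simps list.case) (rule lam_minus)
  also have "lin (\<lambda>u. actN (length w) u y) (ofList (derivL t w)) = lin (\<lambda>u. act u y) (ofList (derivL t w))"
    apply (rule lin_cong)
    apply (drule ofList_nz)
    apply (drule length_derivL)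
    unfolding act_def by simp
  finally show ?thesis .
qed

lemma act_Cons': "act (t # w) y = act1 t (act w y) - sum_list (map (\<lambda>u. act u y) (derivL t w))"
  by (simp only: act_Cons lin_ofList)

lemma FS_act[simp]:
  assumes "FS y"
  shows "FS (act w y)"
proof (induction w rule: length_induct)
  case (1 xs)
  show ?case
  proof (cases xs)
    case Nil
    then show ?thesis using assms by simp
  next
    case (Cons t w)
    have IH: "FS (act u y)" if "length u = length w" for u
      by (rule mp[OF spec[OF 1, of u]]) (simp add: Cons that)
    have "FS (sum_list (map (\<lambda>u. act u y) (derivL t w)))"
      apply (rule FS_sum_list)
      apply (simp only: set_map image_iff)
      apply (erule bexE)
      apply (simp only:)
      apply (rule IH)
      apply (erule length_derivL)
      done
    then show ?thesis
      apply (simp only: Cons act_Cons')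
      apply (rule FS_minus)
       apply (rule FS_act1)
       apply (rule IH, rule refl)
      apply assumption
      done
  qed
qed

lemma act_add:
  assumes "FS y1" "FS y2"
  shows "act w (y1 + y2) = act w y1 + act w y2"
proof (induction w rule: length_induct)
  case (1 xs)
  show ?case
  proof (cases xs)
    case Nil
    then show ?thesis using assms by simp
  next
    case (Cons t w)
    have IH: "act u (y1 + y2) = act u y1 + act u y2" if "length u = length w" for u
      by (rule mp[OF spec[OF 1, of u]]) (simp add: Cons that)
    have "sum_list (map (\<lambda>u. act u (y1 + y2)) (derivL t w)) = sum_list (map (\<lambda>u. act u y1 + act u y2) (derivL t w))"
      by (rule arg_cong[where f=sum_list], rule map_cong) (auto intro!: IH dest: length_derivL)
    then show ?thesis
      apply (simp only: Cons act_Cons' sum_list_addf')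
      apply (simp only: IH[OF refl] act1_add FS_act assms)
      apply (simp add: algebra_simps)
      done
  qed
qed

lemma act_sc:
  assumes "FS y"
  shows "act w (sc a y) = sc a (act w y)"
proof (induction w rule: length_induct)
  case (1 xs)
  show ?case
  proof (cases xs)
    case Nil
    then show ?thesis using assms by simp
  next
    case (Cons t w)
    have IH: "act u (sc a y) = sc a (act u y)" if "length u = length w" for u
      by (rule mp[OF spec[OF 1, of u]]) (simp add: Cons that)
    have "sum_list (map (\<lambda>u. act u (sc a y)) (derivL t w)) = sum_list (map (\<lambda>u. sc a (act u y)) (derivL t w))"
      by (rule arg_cong[where f=sum_list], rule map_cong) (auto intro!: IH dest: length_derivL)
    then show ?thesis
      apply (simp only: Cons act_Cons' sc_sum_list)
      apply (simp only: IH[OF refl] act1_sc FS_act assms sc_minus)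
      done
  qed
qed

lemma act_zero[simp]: "act w 0 = 0"
  using act_sc[of 0 w 0] by simp

lemma act_minus:
  assumes "FS y1" "FS y2"
  shows "act w (y1 - y2) = act w y1 - act w y2"
proof -
  have e: "y1 - y2 = y1 + sc (-1) y2" by (simp only: sc_uminus diff_conv_add_uminus)
  have "act w (y1 - y2) = act w (y1 + sc (-1) y2)" by (simp only: e)
  also have "\<dots> = act w y1 + act w (sc (-1) y2)" by (rule act_add) (simp_all add: assms)
  also have "\<dots> = act w y1 + sc (-1) (act w y2)" by (simp only: act_sc assms)
  also have "\<dots> = act w y1 - act w y2" by (simp only: sc_uminus diff_conv_add_uminus)
  finally show ?thesis .
qed

lemma FS_actU[simp]: "FS f \<Longrightarrow> FS y \<Longrightarrow> FS (actU f y)"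
  unfolding actU_def by (rule FS_lin) auto

lemma actU_add_left: "FS f \<Longrightarrow> FS g \<Longrightarrow> actU (f + g) y = actU f y + actU g y"
  unfolding actU_def by (rule lin_add)
lemma actU_minus_left: "FS f \<Longrightarrow> FS g \<Longrightarrow> actU (f - g) y = actU f y - actU g y"
  unfolding actU_def by (rule lin_minus)
lemma actU_sc_left: "FS f \<Longrightarrow> actU (sc a f) y = sc a (actU f y)"
  unfolding actU_def by (rule lin_sc)
lemma actU_zero_left[simp]: "actU 0 y = 0"
  unfolding actU_def by simp

lemma actU_add_right: "FS y1 \<Longrightarrow> FS y2 \<Longrightarrow> actU f (y1 + y2) = actU f y1 + actU f y2"
  unfolding actU_def by (simp only: act_add lin_Fadd)
lemma actU_minus_right: "FS y1 \<Longrightarrow> FS y2 \<Longrightarrow> actU f (y1 - y2) = actU f y1 - actU f y2"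
  unfolding actU_def by (simp only: act_minus lin_Fminus)
lemma actU_sc_right: "FS y \<Longrightarrow> actU f (sc a y) = sc a (actU f y)"
  unfolding actU_def by (simp only: act_sc lin_Fsc)
lemma actU_zero_right[simp]: "actU f 0 = 0"
  unfolding actU_def by (simp add: lam_zero)

lemma actU_mono: "actU (monomial w) y = act w y"
  unfolding actU_def by simp

lemma actU_tree: "actU (monomial [t]) y = act1 t y"
  unfolding actU_mono by (simp add: act_Cons)

lemma actU_ofList: "actU (ofList L) y = sum_list (map (\<lambda>u. act u y) L)"
  unfolding actU_def by (rule lin_ofList)

lemma L2_tree:
  assumes "FS W" "FS y"
  shows "actU (mult (monomial [t]) W) y = act1 t (actU W y) - actU (act1 t W) y"
proof -
  have "actU (mult (monomial [t]) W) y = lin (\<lambda>w. act w y) (lin (\<lambda>w'. monomial (t # w')) W)"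
    unfolding actU_def mult_monoL by simp
  also have "\<dots> = lin (\<lambda>w'. act (t # w') y) W"
    by (subst lin_lin) (use assms in auto)
  also have "\<dots> = lin (\<lambda>w'. act1 t (act w' y)) W - lin (\<lambda>w'. actU (ofList (derivL t w')) y) W"
    unfolding act_Cons actU_def by (rule lin_Fminus)
  also have "lin (\<lambda>w'. act1 t (act w' y)) W = act1 t (actU W y)"
    unfolding act1_def actU_def
    by (subst lin_lin) (use assms in auto)
  also have "lin (\<lambda>w'. actU (ofList (derivL t w')) y) W = actU (act1 t W) y"
    unfolding act1_def actU_def
    by (subst lin_lin) (use assms in auto)
  finally show ?thesis .
qed



declare zero_fun_apply[simp del] plus_fun_apply[simp del] minus_apply[simp del]

definition derivU :: "('c, 'k::field) U \<Rightarrow> bool" where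
  "derivU X \<longleftrightarrow> (\<forall>f g. FS f \<longrightarrow> FS g \<longrightarrow> actU X (mult f g) = mult (actU X f) g + mult f (actU X g))"

definition L2U :: "('c, 'k::field) U \<Rightarrow> bool" where
  "L2U X \<longleftrightarrow> (\<forall>W y. FS W \<longrightarrow> FS y \<longrightarrow> actU (mult X W) y = actU X (actU W y) - actU (actU X W) y)"

inductive LieB :: "nat \<Rightarrow> ('c, 'k::field) U \<Rightarrow> bool" where
  gen: "LieB (Suc 0) (monomial [t])"
| zero: "LieB n 0"
| add: "LieB n f \<Longrightarrow> LieB n g \<Longrightarrow> LieB n (f + g)"
| smult: "LieB n f \<Longrightarrow> LieB n (sc a f)"
| brk: "LieB m f \<Longrightarrow> LieB n g \<Longrightarrow> LieB (m + n) (bracket f g)"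
| mono: "LieB m f \<Longrightarrow> m \<le> n \<Longrightarrow> LieB n f"

definition Good :: "('c, 'k::field) U \<Rightarrow> bool" where
  "Good X \<longleftrightarrow> FS X \<and> derivU X \<and> L2U X \<and> (\<forall>n Y. LieB n Y \<longrightarrow> LieB n (actU X Y))"

lemma LieB_FS: "LieB n f \<Longrightarrow> FS f"
  by (induction rule: LieB.induct) auto

lemma LieB_0: "LieB n f \<Longrightarrow> n = 0 \<Longrightarrow> f = 0"
  by (induction rule: LieB.induct) (auto simp: bracket_eq)

lemma LieB_minus: "LieB n f \<Longrightarrow> LieB n g \<Longrightarrow> LieB n (f - g)"
proof -
  assume "LieB n f" "LieB n g"
  then have "LieB n (f + sc (-1) g)" by (intro LieB.add LieB.smult)
  then show ?thesis by (simp only: sc_uminus diff_conv_add_uminus)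
qed

lemma derivU_bracket:
  assumes "derivU X" "FS X" "FS f" "FS g"
  shows "actU X (bracket f g) = bracket (actU X f) g + bracket f (actU X g)"
proof -
  have "actU X (bracket f g) = actU X (mult f g) - actU X (mult g f)"
    unfolding bracket_eq using assms by (simp add: actU_minus_right)
  also have "\<dots> = (mult (actU X f) g + mult f (actU X g)) - (mult (actU X g) f + mult g (actU X f))"
    using assms unfolding derivU_def by simp
  finally show ?thesis unfolding bracket_eq by (simp add: algebra_simps)
qed

lemma LieB_ofList_singletons: "LieB (Suc 0) (ofList (map (\<lambda>x. [x]) L))"
proof (induction L)
  case Nil then show ?case by (simp add: LieB.zero)
next
  case (Cons a L)
  then show ?case by (simp add: ofList_Cons LieB.add LieB.gen)
qed

lemma LieB_act1_tree: "LieB (Suc 0) (act1 t (monomial [s]) :: ('c,'k::field) U)"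
proof -
  have "act1 t (monomial [s]) = (ofList (map (\<lambda>x. [x]) (graft t s)) :: ('c,'k) U)"
    by (simp add: act1_mono)
  then show ?thesis by (simp only: LieB_ofList_singletons)
qed

lemma Good_tree: "Good (monomial [t] :: ('c,'k::field) U)"
proof -
  have d: "derivU (monomial [t] :: ('c,'k) U)"
    unfolding derivU_def actU_tree by (simp add: act1_deriv)
  have l: "L2U (monomial [t] :: ('c,'k) U)"
    unfolding L2U_def actU_tree by (simp add: L2_tree)
  have p: "LieB n (act1 t Y)" if "LieB n Y" for n and Y :: "('c,'k) U"
    using that
  proof (induction rule: LieB.induct)
    case (gen s)
    show ?case by (rule LieB_act1_tree)
  next
    case (zero n) then show ?case by (simp add: LieB.zero)
  next
    case (add n f g) then show ?case by (simp add: act1_add LieB_FS LieB.add)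
  next
    case (smult n f a) then show ?case by (simp add: act1_sc LieB_FS LieB.smult)
  next
    case (brk m f n g)
    have "act1 t (bracket f g) = bracket (act1 t f) g + bracket f (act1 t g)"
      using derivU_bracket[OF d, of f g] brk.hyps by (simp add: actU_tree LieB_FS)
    then show ?case using brk by (simp add: LieB.add LieB.brk)
  next
    case (mono m f n) then show ?case by (blast intro: LieB.mono)
  qed
  show ?thesis unfolding Good_def using d l p by (simp add: actU_tree)
qed

lemma GoodD:
  assumes "Good X"
  shows "FS X"
    and "\<And>f g. FS f \<Longrightarrow> FS g \<Longrightarrow> actU X (mult f g) = mult (actU X f) g + mult f (actU X g)"
    and "\<And>W y. FS W \<Longrightarrow> FS y \<Longrightarrow> actU (mult X W) y = actU X (actU W y) - actU (actU X W) y"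
    and "\<And>n Y. LieB n Y \<Longrightarrow> LieB n (actU X Y)"
  using assms unfolding Good_def derivU_def L2U_def by blast+

lemma Good_zero: "Good (0 :: ('c,'k::field) U)"
  unfolding Good_def derivU_def L2U_def by (simp add: LieB.zero)

lemma Good_add:
  assumes f: "Good f" and g: "Good g"
  shows "Good (f + g)"
proof -
  note F = GoodD[OF f] and G = GoodD[OF g]
  have d: "derivU (f + g)"
    unfolding derivU_def
    by (simp add: F G actU_add_left mult_add_left mult_add_right algebra_simps)
  have l: "L2U (f + g)"
    unfolding L2U_def
    by (simp add: F G actU_add_left mult_add_left actU_add_right algebra_simps)
  have p: "\<forall>n Y. LieB n Y \<longrightarrow> LieB n (actU (f + g) Y)"
    by (simp add: F G actU_add_left LieB.add)
  show ?thesis unfolding Good_def using d l p F G by simp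
qed

lemma Good_sc:
  assumes f: "Good f"
  shows "Good (sc a f)"
proof -
  note F = GoodD[OF f]
  have d: "derivU (sc a f)"
    unfolding derivU_def
    by (simp add: F actU_sc_left mult_sc_left mult_sc_right sc_add)
  have l: "L2U (sc a f)"
    unfolding L2U_def
    by (simp add: F actU_sc_left mult_sc_left actU_sc_right sc_minus)
  have p: "\<forall>n Y. LieB n Y \<longrightarrow> LieB n (actU (sc a f) Y)"
    by (simp add: F actU_sc_left LieB.smult)
  show ?thesis unfolding Good_def using d l p F by simp
qed

lemma brk_expand:
  assumes f: "Good f" and g: "Good g" and Q: "FS Q"
  shows "actU (bracket f g) Q = actU f (actU g Q) - actU (actU f g) Q - (actU g (actU f Q) - actU (actU g f) Q)"
proof -
  note F = GoodD[OF f] and G = GoodD[OF g]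
  have "actU (bracket f g) Q = actU (mult f g) Q - actU (mult g f) Q"
    unfolding bracket_eq by (rule actU_minus_left) (simp_all add: F G)
  then show ?thesis by (simp add: F G Q)
qed

lemma Good_bracket:
  assumes f: "Good f" and g: "Good g" and fg: "Good (actU f g)" and gf: "Good (actU g f)"
  shows "Good (bracket f g)"
proof -
  note F = GoodD[OF f] and G = GoodD[OF g] and FG = GoodD[OF fg] and GF = GoodD[OF gf]
  have d: "derivU (bracket f g)"
    unfolding derivU_def
  proof (intro allI impI)
    fix P Q :: "('a,'b) U" assume P: "FS P" and Q: "FS Q"
    show "actU (bracket f g) (mult P Q) = mult (actU (bracket f g) P) Q + mult P (actU (bracket f g) Q)"
      by (simp add: brk_expand[OF f g] F G FG GF P Q actU_add_right actU_minus_right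
          mult_add_left mult_minus_left mult_add_right mult_minus_right algebra_simps)
  qed
  have l: "L2U (bracket f g)"
    unfolding L2U_def
  proof (intro allI impI)
    fix W y :: "('a,'b) U" assume W: "FS W" and y: "FS y"
    have "actU (mult (bracket f g) W) y = actU (mult f (mult g W)) y - actU (mult g (mult f W)) y"
      unfolding bracket_eq
      by (simp add: F G W mult_minus_left actU_minus_left mult_assoc)
    also have "\<dots> = actU (bracket f g) (actU W y) - actU (actU (bracket f g) W) y"
      by (simp add: brk_expand[OF f g] F G FG GF W y actU_add_right actU_minus_right
          actU_add_left actU_minus_left algebra_simps)
    finally show "actU (mult (bracket f g) W) y = actU (bracket f g) (actU W y) - actU (actU (bracket f g) W) y" .
  qed
  have p: "\<forall>n Y. LieB n Y \<longrightarrow> LieB n (actU (bracket f g) Y)"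
    by (simp add: brk_expand[OF f g] F G FG GF LieB_FS LieB_minus)
  show ?thesis unfolding Good_def using d l p F G by simp
qed

lemma bracket_zero[simp]: "bracket 0 g = 0" "bracket f 0 = 0"
  unfolding bracket_eq by simp_all

lemma LieB_Good_aux:
  fixes X :: "('c, 'k::field) U"
  assumes IHo: "\<And>k (X :: ('c, 'k) U). k < N \<Longrightarrow> LieB k X \<Longrightarrow> Good X"
  shows "LieB n X \<Longrightarrow> n \<le> N \<Longrightarrow> Good X"
proof (induction rule: LieB.induct)
  case (gen t) show ?case by (rule Good_tree)
next
  case (zero n) show ?case by (rule Good_zero)
next
  case (add n f g) show ?case by (rule Good_add; rule add.IH; rule add.prems)
next
  case (smult n f a) show ?case by (rule Good_sc; rule smult.IH; rule smult.prems)
next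
  case (brk m f n g)
  have f: "Good f" by (rule brk.IH(1)) (use brk.prems in simp)
  have g: "Good g" by (rule brk.IH(2)) (use brk.prems in simp)
  show ?case
  proof (cases "m = 0 \<or> n = 0")
    case True
    then show ?thesis
    proof
      assume "m = 0"
      then have "f = 0" by (intro LieB_0[OF brk.hyps(1)])
      then show ?thesis by (simp only: bracket_zero Good_zero)
    next
      assume "n = 0"
      then have "g = 0" by (intro LieB_0[OF brk.hyps(2)])
      then show ?thesis by (simp only: bracket_zero Good_zero)
    qed
  next
    case False
    have "n < N" using False brk.prems by simp
    then have fg: "Good (actU f g)" by (rule IHo) (rule GoodD(4)[OF f brk.hyps(2)])
    have "m < N" using False brk.prems by simp
    then have gf: "Good (actU g f)" by (rule IHo) (rule GoodD(4)[OF g brk.hyps(1)])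
    show ?thesis by (rule Good_bracket[OF f g fg gf])
  qed
next
  case (mono m f n) show ?case by (rule mono.IH) (use mono.prems mono.hyps in simp)
qed

lemma LieB_Good: "LieB n X \<Longrightarrow> Good X"
proof (induction n arbitrary: X rule: less_induct)
  case (less N)
  show ?case by (rule LieB_Good_aux[OF _ less.prems order_refl]) (use less.IH in blast)
qed

lemma LieT_add: "f \<in> LieT \<Longrightarrow> g \<in> LieT \<Longrightarrow> f + g \<in> LieT"
  unfolding plus_fun_def by (rule LieT.add)
lemma LieT_sc: "f \<in> LieT \<Longrightarrow> sc a f \<in> LieT"
  unfolding sc_def by (rule LieT.smult)
lemma LieT_zero: "0 \<in> LieT"
  unfolding zero_fun_def by (rule LieT.zero)
lemma LieT_minus: "f \<in> LieT \<Longrightarrow> g \<in> LieT \<Longrightarrow> f - g \<in> LieT"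
proof -
  assume "f \<in> LieT" "g \<in> LieT"
  then have "f + sc (-1) g \<in> LieT" by (intro LieT_add LieT_sc)
  then show ?thesis by (simp only: sc_uminus diff_conv_add_uminus)
qed

lemma LieB_LieT: "LieB n f \<Longrightarrow> f \<in> LieT"
  by (induction rule: LieB.induct) (auto intro: LieT.gen LieT.brk LieT_add LieT_sc LieT_zero)

lemma LieT_LieB: "f \<in> LieT \<Longrightarrow> \<exists>n. LieB n f"
proof (induction rule: LieT.induct)
  case (gen t) then show ?case using LieB.gen by blast
next
  case zero then show ?case using LieB.zero unfolding zero_fun_def by blast
next
  case (add f g)
  then obtain m n where "LieB m f" "LieB n g" by blast
  then have "LieB (m + n) f" "LieB (m + n) g" by (auto intro: LieB.mono)
  then have "LieB (m + n) (f + g)" by (rule LieB.add)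
  then show ?case unfolding plus_fun_def by blast
next
  case (smult f a)
  then obtain m where "LieB m f" by blast
  then have "LieB m (sc a f)" by (rule LieB.smult)
  then show ?case unfolding sc_def by blast
next
  case (brk f g)
  then obtain m n where "LieB m f" "LieB n g" by blast
  then show ?case using LieB.brk by blast
qed

lemma LieT_Good: "X \<in> LieT \<Longrightarrow> Good X"
  using LieT_LieB LieB_Good by blast

lemma LieT_FS: "X \<in> LieT \<Longrightarrow> FS X"
  using LieT_LieB LieB_FS by blast

lemma LieT_act: "X \<in> LieT \<Longrightarrow> Y \<in> LieT \<Longrightarrow> actU X Y \<in> LieT"
  using LieT_LieB LieB_LieT GoodD(4)[OF LieT_Good] by blast



lemma restrictL_in: "x \<in> LieT \<Longrightarrow> restrictL F x = F x"
  by (simp add: restrictL_def)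

lemma restrictL_out: "x \<notin> LieT \<Longrightarrow> restrictL F x = 0"
  by (simp add: restrictL_def zero_fun_def)

lemma restrictL_cong: "(\<And>x. x \<in> LieT \<Longrightarrow> F x = G x) \<Longrightarrow> restrictL F = restrictL G"
  by (rule ext) (simp add: restrictL_def)

lemma restrictL_idem[simp]: "restrictL (restrictL F) = restrictL F"
  by (rule restrictL_cong) (simp add: restrictL_in)

lemma genAlg_restr: "G \<in> genAlg S \<Longrightarrow> restrictL G = G"
  by (induction rule: genAlg.induct) simp_all

lemma gA_cong: "F \<in> genAlg S \<Longrightarrow> (\<And>x. x \<in> LieT \<Longrightarrow> H x = F x) \<Longrightarrow> restrictL H \<in> genAlg S"
proof -
  assume F: "F \<in> genAlg S" and H: "\<And>x. x \<in> LieT \<Longrightarrow> H x = F x"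
  have "restrictL H = restrictL F" by (rule restrictL_cong) (rule H)
  also have "\<dots> = F" by (rule genAlg_restr[OF F])
  finally show ?thesis using F by simp
qed

lemma gA_gen: "F \<in> S \<Longrightarrow> (\<And>x. x \<in> LieT \<Longrightarrow> H x = F x) \<Longrightarrow> restrictL H \<in> genAlg S"
proof -
  assume F: "F \<in> S" and H: "\<And>x. x \<in> LieT \<Longrightarrow> H x = F x"
  have "restrictL H = restrictL F" by (rule restrictL_cong) (rule H)
  then show ?thesis using genAlg.gen[OF F] by simp
qed

lemma gA_one: "(\<And>x. x \<in> LieT \<Longrightarrow> H x = x) \<Longrightarrow> restrictL H \<in> genAlg S"
proof -
  assume H: "\<And>x. x \<in> LieT \<Longrightarrow> H x = x"
  have "restrictL H = restrictL id" by (rule restrictL_cong) (simp add: H)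
  then show ?thesis using genAlg.one by simp
qed

lemma gA_add: "F \<in> genAlg S \<Longrightarrow> G \<in> genAlg S \<Longrightarrow> (\<And>x. x \<in> LieT \<Longrightarrow> H x = F x + G x) \<Longrightarrow> restrictL H \<in> genAlg S"
proof -
  assume F: "F \<in> genAlg S" and G: "G \<in> genAlg S" and H: "\<And>x. x \<in> LieT \<Longrightarrow> H x = F x + G x"
  have "restrictL H = restrictL (\<lambda>x v. F x v + G x v)"
    by (rule restrictL_cong) (simp add: H plus_fun_def)
  then show ?thesis using genAlg.add[OF F G] by simp
qed

lemma gA_sc: "F \<in> genAlg S \<Longrightarrow> (\<And>x. x \<in> LieT \<Longrightarrow> H x = sc a (F x)) \<Longrightarrow> restrictL H \<in> genAlg S"
proof -
  assume F: "F \<in> genAlg S" and H: "\<And>x. x \<in> LieT \<Longrightarrow> H x = sc a (F x)"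
  have "restrictL H = restrictL (\<lambda>x v. a * F x v)"
    by (rule restrictL_cong) (simp add: H sc_def)
  then show ?thesis using genAlg.smult[OF F] by simp
qed

lemma gA_comp: "F \<in> genAlg S \<Longrightarrow> G \<in> genAlg S \<Longrightarrow> (\<And>x. x \<in> LieT \<Longrightarrow> H x = F (G x)) \<Longrightarrow> restrictL H \<in> genAlg S"
proof -
  assume F: "F \<in> genAlg S" and G: "G \<in> genAlg S" and H: "\<And>x. x \<in> LieT \<Longrightarrow> H x = F (G x)"
  have "restrictL H = restrictL (F \<circ> G)"
    by (rule restrictL_cong) (simp add: H)
  then show ?thesis using genAlg.comp[OF F G] by simp
qed

lemma gA_zero: "(\<And>x. x \<in> LieT \<Longrightarrow> H x = 0) \<Longrightarrow> restrictL H \<in> genAlg S"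
proof -
  assume H: "\<And>x. x \<in> LieT \<Longrightarrow> H x = 0"
  have one: "restrictL id \<in> genAlg S" by (rule genAlg.one)
  show ?thesis by (rule gA_sc[OF one, where a=0]) (simp add: H)
qed

lemma gA_minus: "F \<in> genAlg S \<Longrightarrow> G \<in> genAlg S \<Longrightarrow> (\<And>x. x \<in> LieT \<Longrightarrow> H x = F x - G x) \<Longrightarrow> restrictL H \<in> genAlg S"
proof -
  assume F: "F \<in> genAlg S" and G: "G \<in> genAlg S" and H: "\<And>x. x \<in> LieT \<Longrightarrow> H x = F x - G x"
  have G': "restrictL (\<lambda>x. sc (-1) (G x)) \<in> genAlg S" by (rule gA_sc[OF G]) simp
  have G'': "restrictL (\<lambda>x. sc (-1) (G x)) = (\<lambda>x. sc (-1) (G x))"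
  proof (rule ext)
    fix x show "restrictL (\<lambda>x. sc (-1) (G x)) x = sc (-1) (G x)"
    proof (cases "x \<in> LieT")
      case True then show ?thesis by (simp add: restrictL_in)
    next
      case False then show ?thesis
        using genAlg_restr[OF G] restrictL_out[OF False, of G] by (simp add: restrictL_out)
    qed
  qed
  show ?thesis
    by (rule gA_add[OF F G'[unfolded G'']]) (simp add: H sc_uminus)
qed

lemma genAlg_mono: "(\<And>F. F \<in> S \<Longrightarrow> restrictL F \<in> genAlg T) \<Longrightarrow> G \<in> genAlg S \<Longrightarrow> G \<in> genAlg T"
proof -
  assume ST: "\<And>F. F \<in> S \<Longrightarrow> restrictL F \<in> genAlg T"
  show "G \<in> genAlg S \<Longrightarrow> G \<in> genAlg T"
  proof (induction rule: genAlg.induct)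
    case (gen F) then show ?case by (rule ST)
  next
    case one then show ?case by (rule genAlg.one)
  next
    case (add F G) show ?case using add.IH by (rule genAlg.add)
  next
    case (smult F a) show ?case using smult.IH by (rule genAlg.smult)
  next
    case (comp F G) show ?case using comp.IH by (rule genAlg.comp)
  qed
qed


subsection \<open>Linear endomorphisms of Lie(T_C)\<close>

definition Inv :: "(('c, 'k::field) U \<Rightarrow> ('c, 'k) U) \<Rightarrow> bool" where
  "Inv F \<longleftrightarrow> (\<forall>x\<in>LieT. F x \<in> LieT) \<and> (\<forall>x\<in>LieT. \<forall>y\<in>LieT. F (x + y) = F x + F y)
      \<and> (\<forall>x\<in>LieT. \<forall>a. F (sc a x) = sc a (F x))"

lemma InvD:
  assumes "Inv F"
  shows "\<And>x. x \<in> LieT \<Longrightarrow> F x \<in> LieT"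
    and "\<And>x y. x \<in> LieT \<Longrightarrow> y \<in> LieT \<Longrightarrow> F (x + y) = F x + F y"
    and "\<And>x a. x \<in> LieT \<Longrightarrow> F (sc a x) = sc a (F x)"
  using assms unfolding Inv_def by blast+

lemma Inv_minus:
  assumes "Inv F" "x \<in> LieT" "y \<in> LieT"
  shows "F (x - y) = F x - F y"
proof -
  have e: "x - y = x + sc (-1) y" by (simp only: sc_uminus diff_conv_add_uminus)
  have "F (x - y) = F (x + sc (-1) y)" by (simp only: e)
  also have "\<dots> = F x + F (sc (-1) y)" by (rule InvD(2)[OF assms(1,2) LieT_sc[OF assms(3)]])
  also have "\<dots> = F x + sc (-1) (F y)" by (simp only: InvD(3)[OF assms(1,3)])
  also have "\<dots> = F x - F y" by (simp only: sc_uminus diff_conv_add_uminus)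
  finally show ?thesis .
qed

lemma Inv_I:
  assumes "\<And>x. x \<in> LieT \<Longrightarrow> F x \<in> LieT"
    and "\<And>x y. x \<in> LieT \<Longrightarrow> y \<in> LieT \<Longrightarrow> F (x + y) = F x + F y"
    and "\<And>x a. x \<in> LieT \<Longrightarrow> F (sc a x) = sc a (F x)"
  shows "Inv F"
  using assms unfolding Inv_def by blast

lemma Inv_cong: "Inv F \<Longrightarrow> (\<And>x. x \<in> LieT \<Longrightarrow> G x = F x) \<Longrightarrow> Inv G"
  unfolding Inv_def by (simp add: LieT_add LieT_sc)

lemma Inv_restrictL: "Inv F \<Longrightarrow> Inv (restrictL F)"
  by (erule Inv_cong) (simp add: restrictL_in)

lemma genAlg_Inv:
  assumes S: "\<And>F. F \<in> S \<Longrightarrow> Inv F"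
  shows "G \<in> genAlg S \<Longrightarrow> Inv G"
proof (induction rule: genAlg.induct)
  case (gen F) then show ?case by (intro Inv_restrictL S)
next
  case one
  show ?case by (rule Inv_cong[where F=id]) (auto simp: Inv_def restrictL_in)
next
  case (add F G)
  note F = InvD[OF add.IH(1)] and G = InvD[OF add.IH(2)]
  show ?case
  proof (rule Inv_cong[where F="\<lambda>x. F x + G x"])
    show "Inv (\<lambda>x. F x + G x)"
      by (rule Inv_I) (simp_all add: F G LieT_add LieT_sc sc_add algebra_simps)
  next
    fix x :: "('a,'b) U" assume "x \<in> LieT"
    then show "restrictL (\<lambda>x v. F x v + G x v) x = F x + G x"
      by (simp add: restrictL_in plus_fun_def)
  qed
next
  case (smult F a)
  note F = InvD[OF smult.IH]
  show ?case
  proof (rule Inv_cong[where F="\<lambda>x. sc a (F x)"])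
    show "Inv (\<lambda>x. sc a (F x))"
      by (rule Inv_I) (simp_all add: F LieT_add LieT_sc sc_add mult.commute)
  next
    fix x :: "('a,'b) U" assume "x \<in> LieT"
    then show "restrictL (\<lambda>x v. a * F x v) x = sc a (F x)"
      by (simp add: restrictL_in sc_def)
  qed
next
  case (comp F G)
  note F = InvD[OF comp.IH(1)] and G = InvD[OF comp.IH(2)]
  show ?case
  proof (rule Inv_cong[where F="\<lambda>x. F (G x)"])
    show "Inv (\<lambda>x. F (G x))"
      by (rule Inv_I) (simp_all add: F G)
  next
    fix x :: "('a,'b) U" assume "x \<in> LieT"
    then show "restrictL (F \<circ> G) x = F (G x)"
      by (simp add: restrictL_in)
  qed
qed

lemma nabla_eq: "nabla X \<nu> Y = actU X (\<nu> Y) - \<nu> (actU X Y)"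
  by (simp add: nabla_def fun_eq_iff minus_apply)

lemma nabla_restrictL:
  assumes "X \<in> LieT" "x \<in> LieT"
  shows "nabla X (restrictL F) x = nabla X F x"
  using assms by (simp add: nabla_eq restrictL_in LieT_act)

lemma nabla_closed:
  assumes X: "X \<in> LieT"
    and S: "\<And>F. F \<in> S \<Longrightarrow> Inv F \<and> restrictL (nabla X F) \<in> genAlg S"
  shows "G \<in> genAlg S \<Longrightarrow> restrictL (nabla X G) \<in> genAlg S"
proof (induction rule: genAlg.induct)
  case (gen F)
  show ?case
    by (rule gA_cong[OF conjunct2[OF S[OF gen]]]) (simp add: nabla_restrictL X restrictL_in)
next
  case one
  show ?case
    by (rule gA_zero) (simp add: nabla_eq restrictL_in X LieT_act)
next
  case (add F G)
  have IF: "Inv F" and IG: "Inv G" using add.hyps genAlg_Inv S by blast+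
  show ?case
  proof (rule gA_add[OF add.IH])
    fix x :: "('a,'b) U" assume x: "x \<in> LieT"
    have Xx: "actU X x \<in> LieT" by (rule LieT_act[OF X x])
    have FS1: "FS (F x)" "FS (G x)" using InvD(1)[OF IF x] InvD(1)[OF IG x] by (simp_all add: LieT_FS)
    have "nabla X (restrictL (\<lambda>x v. F x v + G x v)) x = actU X (F x + G x) - (F (actU X x) + G (actU X x))"
      by (simp add: nabla_eq restrictL_in x Xx plus_fun_def)
    also have "\<dots> = (actU X (F x) - F (actU X x)) + (actU X (G x) - G (actU X x))"
      by (simp add: actU_add_right FS1 algebra_simps)
    also have "\<dots> = restrictL (nabla X F) x + restrictL (nabla X G) x"
      by (simp add: restrictL_in x nabla_eq)
    finally show "nabla X (restrictL (\<lambda>x v. F x v + G x v)) x = restrictL (nabla X F) x + restrictL (nabla X G) x" .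
  qed
next
  case (smult F a)
  have IF: "Inv F" using smult.hyps genAlg_Inv S by blast
  show ?case
  proof (rule gA_sc[OF smult.IH])
    fix x :: "('a,'b) U" assume x: "x \<in> LieT"
    have Xx: "actU X x \<in> LieT" by (rule LieT_act[OF X x])
    have FS1: "FS (F x)" using InvD(1)[OF IF x] by (simp_all add: LieT_FS)
    have "nabla X (restrictL (\<lambda>x v. a * F x v)) x = actU X (sc a (F x)) - sc a (F (actU X x))"
      by (simp add: nabla_eq restrictL_in x Xx sc_def)
    also have "\<dots> = sc a (actU X (F x) - F (actU X x))"
      by (simp add: actU_sc_right FS1 sc_minus)
    also have "\<dots> = sc a (restrictL (nabla X F) x)"
      by (simp add: restrictL_in x nabla_eq)
    finally show "nabla X (restrictL (\<lambda>x v. a * F x v)) x = sc a (restrictL (nabla X F) x)" .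
  qed
next
  case (comp F G)
  have IF: "Inv F" and IG: "Inv G" using comp.hyps genAlg_Inv S by blast+
  have c1: "restrictL (restrictL (nabla X F) \<circ> G) \<in> genAlg S"
    by (rule genAlg.comp[OF comp.IH(1) comp.hyps(2)])
  have c2: "restrictL (F \<circ> restrictL (nabla X G)) \<in> genAlg S"
    by (rule genAlg.comp[OF comp.hyps(1) comp.IH(2)])
  show ?case
  proof (rule gA_add[OF c1 c2])
    fix x :: "('a,'b) U" assume x: "x \<in> LieT"
    have Xx: "actU X x \<in> LieT" by (rule LieT_act[OF X x])
    have Gx: "G x \<in> LieT" by (rule InvD(1)[OF IG x])
    have XGx: "actU X (G x) \<in> LieT" by (rule LieT_act[OF X Gx])
    have GXx: "G (actU X x) \<in> LieT" by (rule InvD(1)[OF IG Xx])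
    have "nabla X (restrictL (F \<circ> G)) x = actU X (F (G x)) - F (G (actU X x))"
      by (simp add: nabla_eq restrictL_in x Xx)
    also have "\<dots> = (actU X (F (G x)) - F (actU X (G x))) + F (actU X (G x) - G (actU X x))"
      by (simp add: Inv_minus[OF IF XGx GXx])
    also have "\<dots> = restrictL (restrictL (nabla X F) \<circ> G) x + restrictL (F \<circ> restrictL (nabla X G)) x"
      by (simp add: restrictL_in x Gx nabla_eq)
    finally show "nabla X (restrictL (F \<circ> G)) x = restrictL (restrictL (nabla X F) \<circ> G) x + restrictL (F \<circ> restrictL (nabla X G)) x" .
  qed
qed



lemma Inv_delta: "Y \<in> LieT \<Longrightarrow> Inv (delta Y)"
proof (rule Inv_I)
  assume Y: "Y \<in> LieT"
  note FY = LieT_FS[OF Y]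
  show "delta Y x \<in> LieT" if "x \<in> LieT" for x
    using that Y by (simp add: delta_def LieT.brk)
  show "delta Y (x + y) = delta Y x + delta Y y" if "x \<in> LieT" "y \<in> LieT" for x y
    using LieT_FS[OF that(1)] LieT_FS[OF that(2)] FY
    by (simp add: delta_def bracket_eq mult_add_right mult_add_left algebra_simps)
  show "delta Y (sc a x) = sc a (delta Y x)" if "x \<in> LieT" for x a
    using LieT_FS[OF that(1)] FY
    by (simp add: delta_def bracket_eq mult_sc_right mult_sc_left sc_minus)
qed

lemma Inv_dmap: "Y \<in> LieT \<Longrightarrow> Inv (dmap Y)"
proof (rule Inv_I)
  assume Y: "Y \<in> LieT"
  note FY = LieT_FS[OF Y]
  show "dmap Y x \<in> LieT" if "x \<in> LieT" for x
    using that Y by (simp add: dmap_def LieT_act)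
  show "dmap Y (x + y) = dmap Y x + dmap Y y" if "x \<in> LieT" "y \<in> LieT" for x y
    using LieT_FS[OF that(1)] LieT_FS[OF that(2)] FY
    by (simp add: dmap_def actU_add_left)
  show "dmap Y (sc a x) = sc a (dmap Y x)" if "x \<in> LieT" for x a
    using LieT_FS[OF that(1)] FY
    by (simp add: dmap_def actU_sc_left)
qed

lemma Inv_nabla:
  assumes X: "X \<in> LieT" and nu: "Inv \<nu>"
  shows "Inv (nabla X \<nu>)"
proof (rule Inv_I)
  note N = InvD[OF nu]
  show "nabla X \<nu> x \<in> LieT" if "x \<in> LieT" for x
    using that X by (simp add: nabla_eq LieT_minus LieT_act N)
  show "nabla X \<nu> (x + y) = nabla X \<nu> x + nabla X \<nu> y" if x: "x \<in> LieT" and y: "y \<in> LieT" for x y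
  proof -
    have "nabla X \<nu> (x + y) = actU X (\<nu> x + \<nu> y) - \<nu> (actU X x + actU X y)"
      using x y by (simp add: nabla_eq N LieT_FS actU_add_right)
    also have "\<dots> = actU X (\<nu> x) + actU X (\<nu> y) - (\<nu> (actU X x) + \<nu> (actU X y))"
      using x y X by (simp add: N LieT_FS actU_add_right LieT_act)
    finally show ?thesis by (simp add: nabla_eq algebra_simps)
  qed
  show "nabla X \<nu> (sc a x) = sc a (nabla X \<nu> x)" if x: "x \<in> LieT" for x a
  proof -
    have "nabla X \<nu> (sc a x) = actU X (sc a (\<nu> x)) - \<nu> (sc a (actU X x))"
      using x by (simp add: nabla_eq N LieT_FS actU_sc_right)
    also have "\<dots> = sc a (actU X (\<nu> x)) - sc a (\<nu> (actU X x))"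
      using x X by (simp add: N LieT_FS actU_sc_right LieT_act)
    finally show ?thesis by (simp add: nabla_eq sc_minus)
  qed
qed

lemma Inv_nablas: "set Xs \<subseteq> LieT \<Longrightarrow> Inv \<nu> \<Longrightarrow> Inv (nablas Xs \<nu>)"
  by (induction Xs) (auto intro: Inv_nabla)

lemma nablas_cong:
  assumes "set Xs \<subseteq> LieT" "\<And>x. x \<in> LieT \<Longrightarrow> \<nu> x = \<mu> x" "x \<in> LieT"
  shows "nablas Xs \<nu> x = nablas Xs \<mu> x"
  using assms
proof (induction Xs arbitrary: x)
  case Nil then show ?case by simp
next
  case (Cons X Xs)
  then show ?case by (simp add: nabla_eq LieT_act)
qed

definition SEl :: "(('c, 'k::field) U \<Rightarrow> ('c, 'k) U) set" where
  "SEl = {nablas Xs (dmap Y) | Xs Y. set Xs \<subseteq> LieT \<and> Y \<in> LieT}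
              \<union> {nablas Xs (delta Y) | Xs Y. set Xs \<subseteq> LieT \<and> Y \<in> LieT}"

lemma El_eq: "El = genAlg SEl"
  unfolding El_def SEl_def ..

lemma SEl_Inv: "F \<in> SEl \<Longrightarrow> Inv F"
  unfolding SEl_def by (auto intro!: Inv_nablas Inv_dmap Inv_delta)

lemma SEl_nabla: "F \<in> SEl \<Longrightarrow> X \<in> LieT \<Longrightarrow> restrictL (nabla X F) \<in> El"
proof -
  assume F: "F \<in> SEl" and X: "X \<in> LieT"
  have "nabla X F \<in> SEl"
    using F X unfolding SEl_def
    by (auto; metis (no_types, lifting) insert_subset list.set(2) nablas.simps(2))
  then show ?thesis unfolding El_eq by (rule genAlg.gen)
qed

lemma El_nabla: "X \<in> LieT \<Longrightarrow> G \<in> El \<Longrightarrow> restrictL (nabla X G) \<in> El"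
  unfolding El_eq
  by (rule nabla_closed) (auto simp: SEl_Inv SEl_nabla[unfolded El_eq])

lemma El_Inv: "G \<in> El \<Longrightarrow> Inv G"
  unfolding El_eq by (rule genAlg_Inv[OF SEl_Inv])


subsection \<open>Free-edge maps with general coefficients\<close>

abbreviation dot :: "'c \<Rightarrow> ('c, 'k::field) U" where
  "dot c \<equiv> monomial [Node c []]"

definition Ef :: "'c \<Rightarrow> ('c, 'k::field) U \<Rightarrow> ('c, 'k) U \<Rightarrow> ('c, 'k) U \<Rightarrow> ('c, 'k) U" where
  "Ef c A B x = actU (mult (mult A x) B) (dot c)"

lemma freeEdge_Ef: "freeEdge c u v = Ef c (monomial u) (monomial v)"
  by (simp add: freeEdge_def Ef_def fun_eq_iff)

lemma Ef_add_left: "FS A1 \<Longrightarrow> FS A2 \<Longrightarrow> FS B \<Longrightarrow> FS x \<Longrightarrow> Ef c (A1 + A2) B x = Ef c A1 B x + Ef c A2 B x"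
  by (simp add: Ef_def mult_add_left actU_add_left)
lemma Ef_sc_left: "FS A \<Longrightarrow> FS B \<Longrightarrow> FS x \<Longrightarrow> Ef c (sc a A) B x = sc a (Ef c A B x)"
  by (simp add: Ef_def mult_sc_left actU_sc_left)
lemma Ef_zero_left: "Ef c 0 B x = 0"
  by (simp add: Ef_def)
lemma Ef_add_right: "FS A \<Longrightarrow> FS B1 \<Longrightarrow> FS B2 \<Longrightarrow> FS x \<Longrightarrow> Ef c A (B1 + B2) x = Ef c A B1 x + Ef c A B2 x"
  by (simp add: Ef_def mult_add_right actU_add_left)
lemma Ef_sc_right: "FS A \<Longrightarrow> FS B \<Longrightarrow> FS x \<Longrightarrow> Ef c A (sc a B) x = sc a (Ef c A B x)"
  by (simp add: Ef_def mult_sc_right actU_sc_left)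
lemma Ef_zero_right: "Ef c A 0 x = 0"
  by (simp add: Ef_def)
lemma Ef_add_x: "FS A \<Longrightarrow> FS B \<Longrightarrow> FS x \<Longrightarrow> FS y \<Longrightarrow> Ef c A B (x + y) = Ef c A B x + Ef c A B y"
  by (simp add: Ef_def mult_add_right mult_add_left actU_add_left)
lemma Ef_minus_x: "FS A \<Longrightarrow> FS B \<Longrightarrow> FS x \<Longrightarrow> FS y \<Longrightarrow> Ef c A B (x - y) = Ef c A B x - Ef c A B y"
  by (simp add: Ef_def mult_minus_right mult_minus_left actU_minus_left)

lemma nabla_Ef:
  assumes X: "Good X" and A: "FS A" and B: "FS B" and x: "FS x"
  shows "nabla X (Ef c A B) x = Ef c (mult X A) B x + Ef c (actU X A) B x + Ef c A (actU X B) x"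
proof -
  note G = GoodD[OF X]
  let ?W = "mult (mult A x) B"
  have FW: "FS ?W" using A B x by simp
  have e1: "actU X (actU ?W (dot c)) = actU (mult X ?W) (dot c) + actU (actU X ?W) (dot c)"
    using G(3)[OF FW, of "dot c"] by (simp add: algebra_simps)
  have e2: "actU X ?W = mult (mult (actU X A) x) B + mult (mult A (actU X x)) B + mult (mult A x) (actU X B)"
    using A B x G by (simp add: mult_add_left)
  have e3: "mult X ?W = mult (mult (mult X A) x) B"
    using A B x G by (simp add: mult_assoc)
  have "nabla X (Ef c A B) x = actU X (actU ?W (dot c)) - actU (mult (mult A (actU X x)) B) (dot c)"
    by (simp add: nabla_eq Ef_def)
  also have "\<dots> = Ef c (mult X A) B x + Ef c (actU X A) B x + Ef c A (actU X B) x"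
    unfolding e1 e2 e3 Ef_def using A B x G
    by (simp add: actU_add_left algebra_simps)
  finally show ?thesis .
qed

lemma Ef_ext:
  assumes words: "\<And>u v. u \<in> supp A \<Longrightarrow> v \<in> supp B \<Longrightarrow> restrictL (Ef c (monomial u) (monomial v)) \<in> genAlg S"
    and A: "FS A" and B: "FS B"
  shows "restrictL (Ef c A B) \<in> genAlg S"
proof -
  have inner: "restrictL (Ef c (monomial u) B) \<in> genAlg S" if u: "u \<in> supp A" for u
    using B
  proof (induction rule: FS_induct)
    case zero
    show ?case by (rule gA_zero) (simp add: Ef_zero_right)
  next
    case (step g w a)
    have w: "restrictL (Ef c (monomial u) (monomial w)) \<in> genAlg S"
      using words[OF u step(3)] .
    have w': "restrictL (\<lambda>x. sc a (restrictL (Ef c (monomial u) (monomial w)) x)) \<in> genAlg S"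
      by (rule gA_sc[OF w]) simp
    show ?case
    proof (rule gA_add[OF step.IH w'])
      fix x :: "('a,'b) U" assume x: "x \<in> LieT"
      show "Ef c (monomial u) (g + sc a (monomial w)) x =
          restrictL (Ef c (monomial u) g) x + restrictL (\<lambda>x. sc a (restrictL (Ef c (monomial u) (monomial w)) x)) x"
        using x step.hyps(1) LieT_FS[OF x] by (simp add: restrictL_in Ef_add_right Ef_sc_right)
    qed
  qed
  show ?thesis
    using A
  proof (induction rule: FS_induct)
    case zero
    show ?case by (rule gA_zero) (simp add: Ef_zero_left)
  next
    case (step g w a)
    have w: "restrictL (Ef c (monomial w) B) \<in> genAlg S"
      using inner[OF step(3)] .
    have w': "restrictL (\<lambda>x. sc a (restrictL (Ef c (monomial w) B) x)) \<in> genAlg S"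
      by (rule gA_sc[OF w]) simp
    show ?case
    proof (rule gA_add[OF step.IH w'])
      fix x :: "('a,'b) U" assume x: "x \<in> LieT"
      show "Ef c (g + sc a (monomial w)) B x =
          restrictL (Ef c g B) x + restrictL (\<lambda>x. sc a (restrictL (Ef c (monomial w) B) x)) x"
        using x step.hyps(1) LieT_FS[OF x] B by (simp add: restrictL_in Ef_add_left Ef_sc_left)
    qed
  qed
qed



definition homs :: "nat \<Rightarrow> ('c, 'k::field) U \<Rightarrow> bool" where
  "homs n A \<longleftrightarrow> (\<forall>w\<in>supp A. length w = n)"

lemma homs_mono: "homs (length w) (monomial w)"
  by (simp add: homs_def)

lemma homs_act1: "homs (length w) (act1 t (monomial w))"
  unfolding homs_def act1_mono
  using supp_ofList length_derivL by blast

lemma Ef_El_hom: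
  fixes A B :: "('c, 'k::field) U"
  assumes W: "\<And>u v. length u = a \<Longrightarrow> length v = b \<Longrightarrow> restrictL (Ef c (monomial u) (monomial v) :: ('c,'k) U \<Rightarrow> _) \<in> El"
    and "FS A" "FS B" "homs a A" "homs b B"
  shows "restrictL (Ef c A B) \<in> El"
  unfolding El_eq
  by (rule Ef_ext[OF _ assms(2,3)]) (use W assms(4,5) in \<open>auto simp: homs_def El_eq\<close>)

lemma tree_LieT: "monomial [t] \<in> LieT"
  by (rule LieT.gen)

lemma step1:
  fixes c :: 'c and t :: "'c ptree"
  assumes IH: "\<And>u v. length u + length v < n \<Longrightarrow> restrictL (Ef c (monomial u) (monomial v) :: ('c,'k::field) U \<Rightarrow> _) \<in> El"
    and len: "length (t # u') + length v = n"
  shows "restrictL (Ef c (monomial (t # u')) (monomial v) :: ('c,'k) U \<Rightarrow> _) \<in> El"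
proof -
  let ?X = "monomial [t] :: ('c,'k) U"
  have GX: "Good ?X" by (rule Good_tree)
  have G0: "restrictL (Ef c (monomial u') (monomial v) :: ('c,'k) U \<Rightarrow> _) \<in> El"
    by (rule IH) (use len in simp)
  have N: "restrictL (nabla ?X (restrictL (Ef c (monomial u') (monomial v)))) \<in> El"
    by (rule El_nabla[OF tree_LieT G0])
  have E1: "restrictL (Ef c (act1 t (monomial u')) (monomial v) :: ('c,'k) U \<Rightarrow> _) \<in> El"
    by (rule Ef_El_hom[where a="length u'" and b="length v"]) (use IH len in \<open>auto intro: homs_act1 homs_mono\<close>)
  have E2: "restrictL (Ef c (monomial u') (act1 t (monomial v)) :: ('c,'k) U \<Rightarrow> _) \<in> El"
    by (rule Ef_El_hom[where a="length u'" and b="length v"]) (use IH len in \<open>auto intro: homs_act1 homs_mono\<close>)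
  have NE1: "restrictL (\<lambda>x. restrictL (nabla ?X (restrictL (Ef c (monomial u') (monomial v)))) x
                 - restrictL (Ef c (act1 t (monomial u')) (monomial v)) x) \<in> El"
    unfolding El_eq by (rule gA_minus[OF N[unfolded El_eq] E1[unfolded El_eq]]) simp
  show ?thesis
    unfolding El_eq
  proof (rule gA_minus[OF NE1[unfolded El_eq] E2[unfolded El_eq]])
    fix x :: "('c,'k) U" assume x: "x \<in> LieT"
    have Fx: "FS x" by (rule LieT_FS[OF x])
    have "nabla ?X (restrictL (Ef c (monomial u') (monomial v))) x = nabla ?X (Ef c (monomial u') (monomial v)) x"
      by (rule nabla_restrictL[OF tree_LieT x])
    also have "\<dots> = Ef c (monomial (t # u')) (monomial v) x + Ef c (act1 t (monomial u')) (monomial v) x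
                    + Ef c (monomial u') (act1 t (monomial v)) x"
      using nabla_Ef[OF GX _ _ Fx, of "monomial u'" "monomial v" c] by (simp add: actU_tree)
    finally show "Ef c (monomial (t # u')) (monomial v) x =
        restrictL (\<lambda>x. restrictL (nabla ?X (restrictL (Ef c (monomial u') (monomial v)))) x
                 - restrictL (Ef c (act1 t (monomial u')) (monomial v)) x) x
        - restrictL (Ef c (monomial u') (act1 t (monomial v))) x"
      by (simp add: restrictL_in x)
  qed
qed

lemma dot_LieT: "dot c \<in> LieT"
  by (rule LieT.gen)

lemma Ef_El_all:
  fixes c :: 'c
  shows "length u + length v = n \<Longrightarrow> restrictL (Ef c (monomial u) (monomial v) :: ('c,'k::field) U \<Rightarrow> _) \<in> El"
proof (induction n arbitrary: u v rule: less_induct)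
  case (less n)
  have IH: "\<And>u v. length u + length v < n \<Longrightarrow> restrictL (Ef c (monomial u) (monomial v) :: ('c,'k) U \<Rightarrow> _) \<in> El"
    using less.IH by blast
  show ?case
  proof (cases u)
    case (Cons t u')
    have l: "length (t # u') + length v = n" using less.prems Cons by simp
    show ?thesis unfolding Cons by (rule step1[OF IH l])
  next
    case Nil
    show ?thesis
    proof (cases v)
      case Nil
      have "dmap (dot c) \<in> (SEl :: (('c,'k) U \<Rightarrow> _) set)"
        unfolding SEl_def
        by (rule UnI1, rule CollectI, rule exI[where x="[]"], rule exI[where x="dot c"]) (simp add: dot_LieT)
      then show ?thesis unfolding El_eq
        by (rule gA_gen) (simp add: \<open>u = []\<close> Nil Ef_def dmap_def LieT_FS)
    next
      case (Cons t v')
      have l2: "length [t] + length v' = n" using less.prems Cons \<open>u = []\<close> by simp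
      have E3: "restrictL (Ef c (monomial [t]) (monomial v') :: ('c,'k) U \<Rightarrow> _) \<in> El"
        by (rule step1[OF IH l2])
      have E4: "restrictL (Ef c (monomial []) (monomial v') :: ('c,'k) U \<Rightarrow> _) \<in> El"
        by (rule IH) (use less.prems Cons \<open>u = []\<close> in simp)
      have D: "restrictL (delta (monomial [t]) :: ('c,'k) U \<Rightarrow> _) \<in> El"
        unfolding El_eq by (rule genAlg.gen) (auto simp: SEl_def intro!: exI[where x="[]"] tree_LieT)
      have C: "restrictL (\<lambda>x. restrictL (Ef c (monomial []) (monomial v')) (restrictL (delta (monomial [t]) :: ('c,'k) U \<Rightarrow> _) x)) \<in> El"
        unfolding El_eq by (rule gA_comp[OF E4[unfolded El_eq] D[unfolded El_eq]]) simp
      show ?thesis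
        unfolding El_eq
      proof (rule gA_minus[OF E3[unfolded El_eq] C[unfolded El_eq]])
        fix x :: "('c,'k) U" assume x: "x \<in> LieT"
        have Fx: "FS x" by (rule LieT_FS[OF x])
        have bx: "bracket (monomial [t]) x \<in> LieT" by (rule LieT.brk[OF tree_LieT x])
        have e1: "mult x (monomial [t]) = mult (monomial [t]) x - bracket (monomial [t]) x"
          by (simp add: bracket_eq)
        have as: "mult x (monomial (t # v')) = mult (mult x (monomial [t])) (monomial v')"
          using mult_assoc[of x "monomial [t]" "monomial v'"] Fx by simp
        have "Ef c (monomial u) (monomial v) x = actU (mult (mult x (monomial [t])) (monomial v')) (dot c)"
          using Fx by (simp add: Ef_def \<open>u = []\<close> Cons as)
        also have "\<dots> = actU (mult (mult (monomial [t]) x) (monomial v')) (dot c)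
                       - actU (mult (bracket (monomial [t]) x) (monomial v')) (dot c)"
          unfolding e1 using Fx by (simp add: mult_minus_left actU_minus_left)
        also have "\<dots> = Ef c (monomial [t]) (monomial v') x - Ef c (monomial []) (monomial v') (bracket (monomial [t]) x)"
          using Fx by (simp add: Ef_def)
        finally show "Ef c (monomial u) (monomial v) x = restrictL (Ef c (monomial [t]) (monomial v')) x
            - restrictL (\<lambda>x. restrictL (Ef c (monomial []) (monomial v')) (restrictL (delta (monomial [t])) x)) x"
          by (simp add: restrictL_in x bx delta_def)
      qed
    qed
  qed
qed

lemma freeEdge_El: "restrictL (freeEdge c u v) \<in> El"
  unfolding freeEdge_Ef by (rule Ef_El_all) (rule refl)

definition SR :: "(('c, 'k::field) U \<Rightarrow> ('c, 'k) U) set" where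
  "SR = That0 \<union> {delta x | x. x \<in> LieT}"

lemma R_sub_El: "G \<in> genAlg SR \<Longrightarrow> G \<in> El"
  unfolding El_eq
proof (rule genAlg_mono)
  fix F :: "('a,'b) U \<Rightarrow> ('a,'b) U" assume "F \<in> SR"
  then consider (fe) c u v where "F = freeEdge c u v" | (de) x where "F = delta x" "x \<in> LieT"
    unfolding SR_def That0_def by blast
  then show "restrictL F \<in> genAlg SEl"
  proof cases
    case fe then show ?thesis using freeEdge_El[unfolded El_eq] by simp
  next
    case de then show ?thesis
      by (auto intro!: genAlg.gen simp: SEl_def intro!: exI[where x="[]"])
  qed
qed



lemma freeEdge_Inv: "Inv (freeEdge c u v)"
proof -
  have "Inv (restrictL (freeEdge c u v))" by (rule El_Inv[OF freeEdge_El])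
  then show ?thesis by (rule Inv_cong) (simp add: restrictL_in)
qed

lemma SR_Inv: "F \<in> SR \<Longrightarrow> Inv F"
  unfolding SR_def That0_def by (auto intro: freeEdge_Inv Inv_delta)

lemma freeEdge_R: "restrictL (freeEdge c u v) \<in> genAlg SR"
  by (rule genAlg.gen) (auto simp: SR_def That0_def)

lemma delta_R: "x \<in> LieT \<Longrightarrow> restrictL (delta x) \<in> genAlg SR"
  by (rule genAlg.gen) (auto simp: SR_def)

lemma Ef_R:
  fixes A B :: "('c, 'k::field) U"
  shows "FS A \<Longrightarrow> FS B \<Longrightarrow> restrictL (Ef c A B) \<in> genAlg SR"
  by (rule Ef_ext) (simp_all add: freeEdge_R[unfolded freeEdge_Ef])

lemma SR_nabla:
  fixes F :: "('c, 'k::field) U \<Rightarrow> ('c, 'k) U"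
  assumes F: "F \<in> SR" and X: "X \<in> LieT"
  shows "restrictL (nabla X F) \<in> genAlg SR"
proof -
  have GX: "Good X" by (rule LieT_Good[OF X])
  note G = GoodD[OF GX]
  from F consider (fe) c u v where "F = freeEdge c u v" | (de) Y where "F = delta Y" "Y \<in> LieT"
    unfolding SR_def That0_def by blast
  then show ?thesis
  proof cases
    case fe
    have R1: "restrictL (Ef c (mult X (monomial u)) (monomial v)) \<in> genAlg SR"
      by (rule Ef_R) (simp_all add: G)
    have R2: "restrictL (Ef c (actU X (monomial u)) (monomial v)) \<in> genAlg SR"
      by (rule Ef_R) (simp_all add: G)
    have R3: "restrictL (Ef c (monomial u) (actU X (monomial v))) \<in> genAlg SR"
      by (rule Ef_R) (simp_all add: G)
    have R12: "restrictL (\<lambda>x. restrictL (Ef c (mult X (monomial u)) (monomial v)) x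
                  + restrictL (Ef c (actU X (monomial u)) (monomial v)) x) \<in> genAlg SR"
      by (rule gA_add[OF R1 R2]) simp
    show ?thesis
    proof (rule gA_add[OF R12 R3])
      fix x :: "('c,'k) U" assume x: "x \<in> LieT"
      show "nabla X F x = restrictL (\<lambda>x. restrictL (Ef c (mult X (monomial u)) (monomial v)) x
                  + restrictL (Ef c (actU X (monomial u)) (monomial v)) x) x
           + restrictL (Ef c (monomial u) (actU X (monomial v))) x"
        using nabla_Ef[OF GX _ _ LieT_FS[OF x], of "monomial u" "monomial v" c] x
        by (simp add: fe freeEdge_Ef restrictL_in)
    qed
  next
    case de
    have XY: "actU X Y \<in> LieT" by (rule LieT_act[OF X de(2)])
    show ?thesis
    proof (rule gA_gen[where F="delta (actU X Y)"])
      show "delta (actU X Y) \<in> SR" using XY by (auto simp: SR_def)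
    next
      fix x :: "('c,'k) U" assume x: "x \<in> LieT"
      have "actU X (bracket Y x) = bracket (actU X Y) x + bracket Y (actU X x)"
        by (rule derivU_bracket) (use GX G LieT_FS[OF x] LieT_FS[OF de(2)] in \<open>simp_all add: Good_def\<close>)
      then show "nabla X F x = delta (actU X Y) x"
        by (simp add: de nabla_eq delta_def)
    qed
  qed
qed

lemma R_nabla: "X \<in> LieT \<Longrightarrow> G \<in> genAlg SR \<Longrightarrow> restrictL (nabla X G) \<in> genAlg SR"
  by (rule nabla_closed) (auto simp: SR_Inv SR_nabla)

lemma R_nablas:
  fixes \<nu> :: "('c, 'k::field) U \<Rightarrow> ('c, 'k) U"
  shows "set Xs \<subseteq> LieT \<Longrightarrow> restrictL \<nu> \<in> genAlg SR \<Longrightarrow> restrictL (nablas Xs \<nu>) \<in> genAlg SR"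
proof (induction Xs)
  case Nil then show ?case by simp
next
  case (Cons X Xs)
  have X: "X \<in> LieT" and Xs: "set Xs \<subseteq> LieT" using Cons.prems by auto
  have "restrictL (nabla X (restrictL (nablas Xs \<nu>))) \<in> genAlg SR"
    by (rule R_nabla[OF X Cons.IH[OF Xs Cons.prems(2)]])
  then show ?case
    by (rule gA_cong) (simp add: nabla_restrictL[OF X] restrictL_in)
qed



lemma act_tree_dot: "act ts (dot c :: ('c, 'k::field) U) = monomial [Node c ts]"
proof (induction ts rule: length_induct)
  case (1 xs)
  show ?case
  proof (cases xs)
    case Nil then show ?thesis by simp
  next
    case (Cons t w)
    have IH: "act u (dot c :: ('c,'k) U) = monomial [Node c u]" if "length u = length w" for u
      by (rule mp[OF spec[OF 1, of u]]) (simp add: Cons that)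
    have s: "sum_list (map (\<lambda>u. act u (dot c :: ('c,'k) U)) (derivL t w)) = sum_list (map (\<lambda>u. monomial [Node c u]) (derivL t w))"
      by (rule arg_cong[where f=sum_list], rule map_cong) (auto intro!: IH dest: length_derivL)
    have a: "act1 t (monomial [Node c w] :: ('c,'k) U) = monomial [Node c (t # w)] + sum_list (map (\<lambda>u. monomial [Node c u]) (derivL t w))"
      by (simp add: act1_mono ofList_Cons ofList_sum_list graftL_eq_derivL o_def)
    show ?thesis
      by (simp only: Cons act_Cons' IH[OF refl] s a) simp
  qed
qed

lemma act_one: "Good X \<Longrightarrow> actU X (monomial []) = 0"
proof -
  assume GX: "Good X"
  note G = GoodD[OF GX]
  let ?A = "actU X (monomial [])"
  have "actU X (mult (monomial []) (monomial [])) = mult ?A (monomial []) + mult (monomial []) ?A"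
    by (rule G(2)) simp_all
  then have "?A = ?A + ?A" using G by simp
  then show ?thesis by simp
qed

definition GG :: "'c \<Rightarrow> 'c ptree list \<Rightarrow> 'c ptree list \<Rightarrow> ('c, 'k::field) U \<Rightarrow> ('c, 'k) U" where
  "GG c pre rest x = actU (mult (monomial pre) (actU x (monomial rest))) (dot c)"

lemma GG_R:
  fixes c :: 'c
  assumes IH: "\<And>t. t \<in> set ts \<Longrightarrow> restrictL (dmap (monomial [t]) :: ('c,'k::field) U \<Rightarrow> _) \<in> genAlg SR"
  shows "set rest \<subseteq> set ts \<Longrightarrow> restrictL (GG c pre rest :: ('c,'k) U \<Rightarrow> _) \<in> genAlg SR"
proof (induction rest arbitrary: pre)
  case Nil
  show ?case
    by (rule gA_zero) (simp add: GG_def act_one LieT_Good)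
next
  case (Cons t r)
  have t: "t \<in> set ts" and r: "set r \<subseteq> set ts" using Cons.prems by auto
  have C: "restrictL (\<lambda>x. restrictL (freeEdge c pre r :: ('c,'k) U \<Rightarrow> _) (restrictL (dmap (monomial [t])) x)) \<in> genAlg SR"
    by (rule gA_comp[OF freeEdge_R IH[OF t]]) simp
  show ?case
  proof (rule gA_add[OF C Cons.IH[OF r]])
    fix x :: "('c,'k) U" assume x: "x \<in> LieT"
    have GX: "Good x" by (rule LieT_Good[OF x])
    note G = GoodD[OF GX]
    have dx: "dmap (monomial [t]) x \<in> LieT" by (simp add: dmap_def LieT_act[OF x tree_LieT])
    have dx': "actU x (monomial [t]) \<in> LieT" by (rule LieT_act[OF x tree_LieT])
    have e1: "actU x (monomial (t # r)) = mult (actU x (monomial [t])) (monomial r) + mult (monomial [t]) (actU x (monomial r))"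
      using G(2)[of "monomial [t]" "monomial r"] by simp
    have e2: "mult (monomial pre) (actU x (monomial (t # r))) =
        mult (mult (monomial pre) (actU x (monomial [t]))) (monomial r) + mult (monomial (pre @ [t])) (actU x (monomial r))"
      unfolding e1 using G mult_assoc[of "monomial pre" "monomial [t]" "actU x (monomial r)"]
      by (simp add: mult_add_right mult_assoc[symmetric])
    show "GG c pre (t # r) x = restrictL (\<lambda>x. restrictL (freeEdge c pre r) (restrictL (dmap (monomial [t])) x)) x
        + restrictL (GG c (pre @ [t]) r) x"
      using G by (simp add: restrictL_in x dx dx' GG_def e2 actU_add_left freeEdge_def dmap_def)
  qed
qed

lemma DT: "restrictL (dmap (monomial [t]) :: ('c,'k::field) U \<Rightarrow> _) \<in> genAlg SR"
proof (induction t)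
  case (Node c ts)
  have IH: "\<And>t. t \<in> set ts \<Longrightarrow> restrictL (dmap (monomial [t]) :: ('c,'k) U \<Rightarrow> _) \<in> genAlg SR"
    using Node by blast
  have g: "restrictL (GG c [] ts :: ('c,'k) U \<Rightarrow> _) \<in> genAlg SR"
    by (rule GG_R[OF IH order_refl])
  show ?case
  proof (rule gA_add[OF freeEdge_R[of c "[]" ts] g])
    fix x :: "('c,'k) U" assume x: "x \<in> LieT"
    have GX: "Good x" by (rule LieT_Good[OF x])
    note G = GoodD[OF GX]
    have tr: "monomial [Node c ts] = actU (monomial ts) (dot c :: ('c,'k) U)"
      by (simp add: actU_mono act_tree_dot)
    have "dmap (monomial [Node c ts]) x = actU x (actU (monomial ts) (dot c))"
      by (simp add: dmap_def tr)
    also have "\<dots> = actU (mult x (monomial ts)) (dot c) + actU (actU x (monomial ts)) (dot c)"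
      using G(3)[of "monomial ts" "dot c"] by simp
    finally show "dmap (monomial [Node c ts]) x = restrictL (freeEdge c [] ts) x + restrictL (GG c [] ts) x"
      using G by (simp add: restrictL_in x freeEdge_def GG_def)
  qed
qed

lemma DM:
  fixes Y :: "('c, 'k::field) U"
  shows "Y \<in> LieT \<Longrightarrow> restrictL (dmap Y) \<in> genAlg SR"
proof (induction rule: LieT.induct)
  case (gen t) show ?case by (rule DT)
next
  case zero
  show ?case by (rule gA_zero) (simp add: dmap_def lam_zero zero_fun_apply)
next
  case (add f g)
  show ?case
  proof (rule gA_add[OF add.IH])
    fix x :: "('c,'k) U" assume x: "x \<in> LieT"
    have e: "(\<lambda>v. f v + g v) = f + g" by (rule lam_plus)
    show "dmap (\<lambda>v. f v + g v) x = restrictL (dmap f) x + restrictL (dmap g) x"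
      unfolding e using x add.hyps by (simp add: restrictL_in dmap_def actU_add_right LieT_FS)
  qed
next
  case (smult f a)
  show ?case
  proof (rule gA_sc[OF smult.IH])
    fix x :: "('c,'k) U" assume x: "x \<in> LieT"
    have e: "(\<lambda>v. a * f v) = sc a f" by (rule lam_sc)
    show "dmap (\<lambda>v. a * f v) x = sc a (restrictL (dmap f) x)"
      unfolding e using x smult.hyps by (simp add: restrictL_in dmap_def actU_sc_right LieT_FS)
  qed
next
  case (brk f g)
  have c1: "restrictL (\<lambda>x. restrictL (delta f) (restrictL (dmap g) x)) \<in> genAlg SR"
    by (rule gA_comp[OF delta_R[OF brk.hyps(1)] brk.IH(2)]) simp
  have c2: "restrictL (\<lambda>x. restrictL (delta g) (restrictL (dmap f) x)) \<in> genAlg SR"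
    by (rule gA_comp[OF delta_R[OF brk.hyps(2)] brk.IH(1)]) simp
  show ?case
  proof (rule gA_minus[OF c1 c2])
    fix x :: "('c,'k) U" assume x: "x \<in> LieT"
    have GX: "Good x" by (rule LieT_Good[OF x])
    have fx: "actU x f \<in> LieT" "actU x g \<in> LieT" using x brk.hyps by (simp_all add: LieT_act)
    have "actU x (bracket f g) = bracket (actU x f) g + bracket f (actU x g)"
      by (rule derivU_bracket) (use GX brk.hyps in \<open>simp_all add: Good_def LieT_FS\<close>)
    then show "dmap (bracket f g) x = restrictL (\<lambda>x. restrictL (delta f) (restrictL (dmap g) x)) x
        - restrictL (\<lambda>x. restrictL (delta g) (restrictL (dmap f) x)) x"
      using fx by (simp add: restrictL_in x dmap_def delta_def bracket_eq algebra_simps)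
  qed
qed

lemma El_sub_R: "G \<in> El \<Longrightarrow> G \<in> genAlg SR"
  unfolding El_eq
proof (rule genAlg_mono)
  fix F :: "('a,'b) U \<Rightarrow> ('a,'b) U" assume "F \<in> SEl"
  then consider (d) Xs Y where "F = nablas Xs (dmap Y)" "set Xs \<subseteq> LieT" "Y \<in> LieT"
    | (de) Xs Y where "F = nablas Xs (delta Y)" "set Xs \<subseteq> LieT" "Y \<in> LieT"
    unfolding SEl_def by blast
  then show "restrictL F \<in> genAlg SR"
  proof cases
    case d then show ?thesis using R_nablas DM by blast
  next
    case de then show ?thesis using R_nablas delta_R by blast
  qed
qed

theorem lemma5p4:
  shows "(El :: (('c::finite, 'k::field_char_0) U \<Rightarrow> ('c, 'k) U) set)
           = genAlg (That0 \<union> {delta x | x. x \<in> LieT})"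
  using El_sub_R R_sub_El unfolding SR_def by blast


end
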